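(* Let $\Omega\subset\mathbb{R}^N$ be a bounded smooth domain and $f$ a Carath\'eodory function satisfying $(f_1)$: for a.e. $x$, $t\mapsto f(x,t)/t$ is increasing on $(0,\infty)$ and decreasing on $(-\infty,0)$, $\alpha(x):=\lim_{t\to0}f(x,t)/t\ge0$ and $\eta(x):=\lim_{|t|\to\infty}f(x,t)/t$ exist a.e. and lie in $L^\infty(\Omega)$; and $(f_2)$: $\lambda_m(\eta)<1<\lambda_1(\alpha)$ for some $m\ge1$. Then: (i) $\mathcal A$ is open and nonempty; (ii) $\partial\mathcal A=\{u\in H_0^1(\Omega):\|u\|^2=\int_\Omega\eta u^2dx\}$; (iii) $\mathcal A^c=\{u\in H_0^1(\Omega):\|u\|^2\ge\int_\Omega\eta u^2dx\}$; (iv) $\mathcal N\subset\mathcal A$; (v) $\mathcal S\cap\mathcal A\neq\emptyset$.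
   Context: $\|u\|^2=\int_\Omega|\nabla u|^2dx$ on $H_0^1(\Omega)$. For $\theta\in L^\infty(\Omega)$, $\lambda_1(\theta)<\lambda_2(\theta)<\cdots$ are the distinct positive eigenvalues of $-\Delta u=\lambda\theta u$ in $\Omega$, $u=0$ on $\partial\Omega$, with $\lambda_1(0)=\infty$. $\mathcal N=\{u\in H_0^1(\Omega)\setminus\{0\}:\|u\|^2=\int_\Omega f(x,u)u\,dx\}$, $\mathcal S$ the unit sphere of $H_0^1(\Omega)$, $\mathcal A=\{u\in H_0^1(\Omega):\|u\|^2<\int_\Omega\eta u^2dx\}$; $\partial\mathcal A$ and $\mathcal A^c$ are its boundary and complement in $H_0^1(\Omega)$. *)

theory Defs
  imports "HOL-Analysis.Analysis"
begin

fun iter_pd :: "'a::euclidean_space list \<Rightarrow> ('a \<Rightarrow> real) \<Rightarrow> 'a \<Rightarrow> real" where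
  "iter_pd [] f = f"
| "iter_pd (v # vs) f = (\<lambda>x. frechet_derivative (iter_pd vs f) (at x) v)"

definition smooth_on :: "'a::euclidean_space set \<Rightarrow> ('a \<Rightarrow> real) \<Rightarrow> bool" where
  "smooth_on U f \<longleftrightarrow> (\<forall>vs. set vs \<subseteq> Basis \<longrightarrow> iter_pd vs f differentiable_on U)"

definition smooth_bounded_domain :: "'a::euclidean_space set \<Rightarrow> bool" where
  "smooth_bounded_domain \<Omega> \<longleftrightarrow> open \<Omega> \<and> connected \<Omega> \<and> bounded \<Omega> \<and> \<Omega> \<noteq> {} \<and>
     (\<forall>p\<in>frontier \<Omega>. \<exists>U \<phi>. open U \<and> p \<in> U \<and> smooth_on U \<phi> \<and>
        (\<forall>x\<in>U. frechet_derivative \<phi> (at x) \<noteq> (\<lambda>_. 0)) \<and>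
        \<Omega> \<inter> U = {x\<in>U. \<phi> x < 0})"

definition grad :: "('a::euclidean_space \<Rightarrow> real) \<Rightarrow> 'a \<Rightarrow> 'a" where
  "grad \<phi> x = (\<Sum>b\<in>Basis. frechet_derivative \<phi> (at x) b *\<^sub>R b)"

definition test_fun :: "'a::euclidean_space set \<Rightarrow> ('a \<Rightarrow> real) \<Rightarrow> bool" where
  "test_fun \<Omega> \<phi> \<longleftrightarrow> smooth_on UNIV \<phi> \<and> compact (closure {x. \<phi> x \<noteq> 0}) \<and>
     closure {x. \<phi> x \<noteq> 0} \<subseteq> \<Omega>"

definition H01_pair :: "'a::euclidean_space set \<Rightarrow> ('a \<Rightarrow> real) \<Rightarrow> ('a \<Rightarrow> 'a) \<Rightarrow> bool" where
  "H01_pair \<Omega> u g \<longleftrightarrow>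
     u \<in> borel_measurable (lebesgue_on \<Omega>) \<and> g \<in> borel_measurable (lebesgue_on \<Omega>) \<and>
     (\<exists>\<phi>::nat \<Rightarrow> 'a \<Rightarrow> real. (\<forall>n. test_fun \<Omega> (\<phi> n)) \<and>
        (\<forall>n. integrable (lebesgue_on \<Omega>) (\<lambda>x. (\<phi> n x - u x)^2)) \<and>
        (\<forall>n. integrable (lebesgue_on \<Omega>) (\<lambda>x. (norm (grad (\<phi> n) x - g x))^2)) \<and>
        (\<lambda>n. integral\<^sup>L (lebesgue_on \<Omega>) (\<lambda>x. (\<phi> n x - u x)^2)) \<longlonglongrightarrow> 0 \<and>
        (\<lambda>n. integral\<^sup>L (lebesgue_on \<Omega>) (\<lambda>x. (norm (grad (\<phi> n) x - g x))^2)) \<longlonglongrightarrow> 0)"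

definition H01 :: "'a::euclidean_space set \<Rightarrow> ('a \<Rightarrow> real) set" where
  "H01 \<Omega> = {u. \<exists>g. H01_pair \<Omega> u g}"

definition wgrad :: "'a::euclidean_space set \<Rightarrow> ('a \<Rightarrow> real) \<Rightarrow> 'a \<Rightarrow> 'a" where
  "wgrad \<Omega> u = (SOME g. H01_pair \<Omega> u g)"

definition hnorm2 :: "'a::euclidean_space set \<Rightarrow> ('a \<Rightarrow> real) \<Rightarrow> real" where
  "hnorm2 \<Omega> u = integral\<^sup>L (lebesgue_on \<Omega>) (\<lambda>x. (norm (wgrad \<Omega> u x))^2)"

text \<open>Topology of H_0^1 (elements are represented by functions; the norm only
  sees a.e. classes).\<close>
definition H_open :: "'a::euclidean_space set \<Rightarrow> ('a \<Rightarrow> real) set \<Rightarrow> bool" where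
  "H_open \<Omega> A \<longleftrightarrow> A \<subseteq> H01 \<Omega> \<and>
     (\<forall>u\<in>A. \<exists>e>0. \<forall>v\<in>H01 \<Omega>. hnorm2 \<Omega> (\<lambda>x. v x - u x) < e \<longrightarrow> v \<in> A)"

definition H_closure :: "'a::euclidean_space set \<Rightarrow> ('a \<Rightarrow> real) set \<Rightarrow> ('a \<Rightarrow> real) set" where
  "H_closure \<Omega> A = {u\<in>H01 \<Omega>. \<forall>e>0. \<exists>v\<in>A. hnorm2 \<Omega> (\<lambda>x. v x - u x) < e}"

definition H_interior :: "'a::euclidean_space set \<Rightarrow> ('a \<Rightarrow> real) set \<Rightarrow> ('a \<Rightarrow> real) set" where
  "H_interior \<Omega> A = {u\<in>A. \<exists>e>0. \<forall>v\<in>H01 \<Omega>. hnorm2 \<Omega> (\<lambda>x. v x - u x) < e \<longrightarrow> v \<in> A}"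

definition H_boundary :: "'a::euclidean_space set \<Rightarrow> ('a \<Rightarrow> real) set \<Rightarrow> ('a \<Rightarrow> real) set" where
  "H_boundary \<Omega> A = H_closure \<Omega> A - H_interior \<Omega> A"

definition is_eigenvalue :: "'a::euclidean_space set \<Rightarrow> ('a \<Rightarrow> real) \<Rightarrow> real \<Rightarrow> bool" where
  "is_eigenvalue \<Omega> \<theta> l \<longleftrightarrow> (\<exists>u\<in>H01 \<Omega>. \<not> (AE x in lebesgue_on \<Omega>. u x = 0) \<and>
     (\<forall>v\<in>H01 \<Omega>. integral\<^sup>L (lebesgue_on \<Omega>) (\<lambda>x. wgrad \<Omega> u x \<bullet> wgrad \<Omega> v x)
                = l * integral\<^sup>L (lebesgue_on \<Omega>) (\<lambda>x. \<theta> x * u x * v x)))"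

definition pos_eigs :: "'a::euclidean_space set \<Rightarrow> ('a \<Rightarrow> real) \<Rightarrow> real set" where
  "pos_eigs \<Omega> \<theta> = {l. l > 0 \<and> is_eigenvalue \<Omega> \<theta> l}"

text \<open>eig_aux k = the (k+1)-th smallest distinct positive eigenvalue (\<infinity> if none).\<close>
fun eig_aux :: "'a::euclidean_space set \<Rightarrow> ('a \<Rightarrow> real) \<Rightarrow> nat \<Rightarrow> ereal" where
  "eig_aux \<Omega> \<theta> 0 = Inf (ereal ` pos_eigs \<Omega> \<theta>)"
| "eig_aux \<Omega> \<theta> (Suc k) = Inf (ereal ` {l \<in> pos_eigs \<Omega> \<theta>. ereal l > eig_aux \<Omega> \<theta> k})"

text \<open>lambda_k(\<theta>) for k \<ge> 1; lambda_1(0) = \<infinity>.\<close>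
definition lambda_eig :: "'a::euclidean_space set \<Rightarrow> ('a \<Rightarrow> real) \<Rightarrow> nat \<Rightarrow> ereal" where
  "lambda_eig \<Omega> \<theta> k = eig_aux \<Omega> \<theta> (k - 1)"

definition caratheodory :: "'a::euclidean_space set \<Rightarrow> ('a \<Rightarrow> real \<Rightarrow> real) \<Rightarrow> bool" where
  "caratheodory \<Omega> f \<longleftrightarrow> (\<forall>t. (\<lambda>x. f x t) \<in> borel_measurable (lebesgue_on \<Omega>)) \<and>
     (AE x in lebesgue_on \<Omega>. continuous_on UNIV (f x))"

definition Linf :: "'a::euclidean_space set \<Rightarrow> ('a \<Rightarrow> real) \<Rightarrow> bool" where
  "Linf \<Omega> \<theta> \<longleftrightarrow> \<theta> \<in> borel_measurable (lebesgue_on \<Omega>) \<and>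
     (\<exists>C. AE x in lebesgue_on \<Omega>. \<bar>\<theta> x\<bar> \<le> C)"

definition nehari :: "'a::euclidean_space set \<Rightarrow> ('a \<Rightarrow> real \<Rightarrow> real) \<Rightarrow> ('a \<Rightarrow> real) set" where
  "nehari \<Omega> f = {u \<in> H01 \<Omega>. \<not> (AE x in lebesgue_on \<Omega>. u x = 0) \<and>
      hnorm2 \<Omega> u = integral\<^sup>L (lebesgue_on \<Omega>) (\<lambda>x. f x (u x) * u x)}"

definition unit_sphere :: "'a::euclidean_space set \<Rightarrow> ('a \<Rightarrow> real) set" where
  "unit_sphere \<Omega> = {u \<in> H01 \<Omega>. hnorm2 \<Omega> u = 1}"

definition setA :: "'a::euclidean_space set \<Rightarrow> ('a \<Rightarrow> real) \<Rightarrow> ('a \<Rightarrow> real) set" where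
  "setA \<Omega> \<eta> = {u \<in> H01 \<Omega>. hnorm2 \<Omega> u < integral\<^sup>L (lebesgue_on \<Omega>) (\<lambda>x. \<eta> x * (u x)^2)}"

end

theory Submission
  imports Defs
begin


lemma ibp_core:
  fixes w :: "'a::euclidean_space \<Rightarrow> real" and e :: 'a
  assumes diff: "\<And>x. (w has_derivative w' x) (at x)"
    and cont: "continuous_on UNIV (\<lambda>x. w' x e)"
    and K: "compact K" "\<And>x. x \<notin> K \<Longrightarrow> w x = 0"
  shows "integral\<^sup>L lborel (\<lambda>x. w' x e) = 0"
proof -
  define d where "d x = w' x e" for x
  have d0: "d x = 0" if "x \<notin> K" for x
  proof -
    have "open (- K)" using K(1) by (simp add: compact_imp_closed open_Compl)
    have "((\<lambda>_. 0::real) has_derivative (\<lambda>_. 0)) (at x)" by simp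
    then have "(w has_derivative (\<lambda>_. 0)) (at x)"
      by (rule has_derivative_transform_within_open[OF _ \<open>open (- K)\<close>]) (use that K in auto)
    then have "w' x = (\<lambda>_. 0)" using diff has_derivative_unique by blast
    then show ?thesis by (simp add: d_def)
  qed
  have contw: "continuous_on UNIV w"
    using diff by (meson continuous_at_imp_continuous_on has_derivative_continuous)
  obtain B where B: "\<And>x. \<bar>d x\<bar> \<le> B" "B \<ge> 0"
  proof -
    have "compact (d ` K)" using K(1) cont
      by (intro compact_continuous_image) (auto simp: d_def intro: continuous_on_subset)
    then obtain B0 where "\<forall>y\<in>d ` K. norm y \<le> B0" using compact_imp_bounded bounded_iff by metis
    then have "\<bar>d x\<bar> \<le> max B0 0" for x using d0 by (cases "x \<in> K") force+
    then show ?thesis using that[of "max B0 0"] by simp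
  qed
  define K2 where "K2 = (\<lambda>p. fst p - snd p *\<^sub>R e) ` (K \<times> {0..1::real})"
  have cK2: "compact K2" unfolding K2_def using K(1)
    by (intro compact_continuous_image continuous_intros compact_Times) auto
  define q where "q n x = (w (x + (1 / real (Suc n)) *\<^sub>R e) - w x) * real (Suc n)" for n x
  have wmeas: "w \<in> borel_measurable borel" using contw by (rule borel_measurable_continuous_onI)
  have wint: "integrable lborel w"
  proof -
    have "integrable lborel (\<lambda>x. indicator K x *\<^sub>R w x)"
      using K(1) contw by (intro borel_integrable_compact) (auto intro: continuous_on_subset)
    moreover have "(\<lambda>x. indicator K x *\<^sub>R w x) = w" using K(2) by (intro ext) (auto simp: indicator_def)
    ultimately show ?thesis by simp
  qed
  have transl: "integral\<^sup>L lborel (\<lambda>x. w (x + c)) = integral\<^sup>L lborel w" for c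
  proof -
    have "integral\<^sup>L lborel w = integral\<^sup>L (distr lborel borel ((+) c)) w"
      by (simp add: lborel_distr_plus)
    also have "\<dots> = integral\<^sup>L lborel (\<lambda>x. w (c + x))"
      using wmeas by (intro integral_distr) auto
    finally show ?thesis by (simp add: add.commute)
  qed
  have transint: "integrable lborel (\<lambda>x. w (x + c))" for c
  proof -
    have "integrable (distr lborel borel ((+) c)) w" using wint by (simp add: lborel_distr_plus)
    then have "integrable lborel (\<lambda>x. w (c + x))"
      using wmeas by (subst (asm) integrable_distr_eq) auto
    then show ?thesis by (simp add: add.commute)
  qed
  have qint0: "integral\<^sup>L lborel (q n) = 0" for n
    unfolding q_def using transint wint transl by simp
  have gder: "((\<lambda>s. w (x + s *\<^sub>R e)) has_field_derivative d (x + s *\<^sub>R e)) (at s)" for x s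
  proof -
    have "((\<lambda>s. x + s *\<^sub>R e) has_derivative (\<lambda>h. h *\<^sub>R e)) (at s)"
      by (auto intro!: derivative_eq_intros)
    from diff_chain_at[OF this diff]
    have "((\<lambda>s. w (x + s *\<^sub>R e)) has_derivative (\<lambda>h. w' (x + s *\<^sub>R e) (h *\<^sub>R e))) (at s)"
      by (simp add: o_def)
    moreover have "(\<lambda>h. w' (x + s *\<^sub>R e) (h *\<^sub>R e)) = (\<lambda>h. d (x + s *\<^sub>R e) * h)"
      using has_derivative_bounded_linear[OF diff[of "x + s *\<^sub>R e"]]
      by (auto simp: d_def linear_simps bounded_linear.linear)
    ultimately show ?thesis by (simp add: has_field_derivative_def)
  qed
  have lim: "(\<lambda>n. q n x) \<longlonglongrightarrow> d x" for x
  proof -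
    have "((\<lambda>s. (w (x + s *\<^sub>R e) - w (x + 0 *\<^sub>R e)) / (s - 0)) \<longlongrightarrow> d (x + 0 *\<^sub>R e)) (at 0)"
      using gder[of x 0] unfolding has_field_derivative_iff by simp
    then have "((\<lambda>s. (w (x + s *\<^sub>R e) - w x) / s) \<longlongrightarrow> d x) (at 0)" by simp
    moreover have "(\<lambda>n. 1 / real (Suc n)) \<longlonglongrightarrow> 0" using LIMSEQ_inverse_real_of_nat by (simp add: inverse_eq_divide)
    ultimately have "((\<lambda>s. (w (x + s *\<^sub>R e) - w x) / s) \<circ> (\<lambda>n. 1 / real (Suc n))) \<longlonglongrightarrow> d x"
      unfolding tendsto_at_iff_sequentially by auto
    then show ?thesis by (simp add: q_def o_def)
  qed
  have bound: "\<bar>q n x\<bar> \<le> B * indicator K2 x" for n x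
  proof -
    define t where "t = 1 / real (Suc n)"
    have t: "0 < t" "t \<le> 1" by (auto simp: t_def)
    obtain z where "0 < z" "z < t" and z: "w (x + t *\<^sub>R e) - w (x + 0 *\<^sub>R e) = (t - 0) * d (x + z *\<^sub>R e)"
      using MVT2[OF t(1), of "\<lambda>s. w (x + s *\<^sub>R e)" "\<lambda>s. d (x + s *\<^sub>R e)"] gder by blast
    have qeq: "q n x = d (x + z *\<^sub>R e)" using z t by (simp add: q_def t_def)
    show ?thesis
    proof (cases "x \<in> K2")
      case True then show ?thesis using B qeq by simp
    next
      case False
      have "x \<notin> K" using False unfolding K2_def by (force intro: image_eqI[of x _ "(x,0)"])
      moreover have "x + t *\<^sub>R e \<notin> K"
      proof
        assume "x + t *\<^sub>R e \<in> K"
        then have "x \<in> K2" unfolding K2_def using t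
          by (intro image_eqI[of x _ "(x + t *\<^sub>R e, t)"]) auto
        then show False using False by simp
      qed
      ultimately show ?thesis using K(2) False B(2) by (simp add: q_def t_def)
    qed
  qed
  have dmeas: "d \<in> borel_measurable lborel"
    using borel_measurable_continuous_onI[OF cont] unfolding d_def by simp
  have qmeas: "q n \<in> borel_measurable lborel" for n
    unfolding q_def using wmeas by measurable
  have "(\<lambda>n. integral\<^sup>L lborel (q n)) \<longlonglongrightarrow> integral\<^sup>L lborel d"
  proof (rule integral_dominated_convergence[where w="\<lambda>x. B * indicator K2 x"])
    show "integrable lborel (\<lambda>x. B * indicator K2 x)"
      using cK2 by (auto intro!: emeasure_compact_finite borel_compact integrable_mult_right)
  qed (use dmeas qmeas lim bound in auto)
  then have "integral\<^sup>L lborel d = 0" using qint0 by (simp add: LIMSEQ_const_iff)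
  moreover have "d = (\<lambda>x. w' x e)" by (simp add: d_def fun_eq_iff)
  ultimately show ?thesis by simp
qed


lemma fd_works: "f differentiable at x \<Longrightarrow> (f has_derivative frechet_derivative f (at x)) (at x)"
  using frechet_derivative_works by blast

lemma fd_lincomb:
  fixes F G :: "'a::euclidean_space \<Rightarrow> real"
  assumes "F differentiable at x" "G differentiable at x"
  shows "frechet_derivative (\<lambda>x. a * F x + c * G x) (at x)
          = (\<lambda>h. a * frechet_derivative F (at x) h + c * frechet_derivative G (at x) h)"
proof -
  have "((\<lambda>x. a * F x + c * G x) has_derivative
          (\<lambda>h. a * frechet_derivative F (at x) h + c * frechet_derivative G (at x) h)) (at x)"
    using fd_works[OF assms(1)] fd_works[OF assms(2)] by (auto intro!: derivative_eq_intros)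
  then show ?thesis by (rule frechet_derivative_at[symmetric])
qed

lemma smooth_diff:
  assumes "smooth_on UNIV \<phi>" "set vs \<subseteq> Basis"
  shows "iter_pd vs \<phi> differentiable at x"
  using assms unfolding smooth_on_def differentiable_on_def by auto

lemma iter_pd_lincomb:
  assumes "smooth_on UNIV \<phi>" "smooth_on UNIV \<psi>" "set vs \<subseteq> Basis"
  shows "iter_pd vs (\<lambda>x. a * \<phi> x + c * \<psi> x) = (\<lambda>x. a * iter_pd vs \<phi> x + c * iter_pd vs \<psi> x)"
  using assms(3)
proof (induction vs)
  case Nil then show ?case by simp
next
  case (Cons v vs)
  then have IH: "iter_pd vs (\<lambda>x. a * \<phi> x + c * \<psi> x) = (\<lambda>x. a * iter_pd vs \<phi> x + c * iter_pd vs \<psi> x)"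
    by simp
  show ?case
  proof (rule ext)
    fix x
    have d1: "iter_pd vs \<phi> differentiable at x" "iter_pd vs \<psi> differentiable at x"
      using Cons.prems by (auto intro!: smooth_diff assms)
    show "iter_pd (v # vs) (\<lambda>x. a * \<phi> x + c * \<psi> x) x = a * iter_pd (v # vs) \<phi> x + c * iter_pd (v # vs) \<psi> x"
      by (simp add: IH fd_lincomb[OF d1])
  qed
qed

lemma smooth_lincomb:
  assumes "smooth_on UNIV \<phi>" "smooth_on UNIV \<psi>"
  shows "smooth_on UNIV (\<lambda>x. a * \<phi> x + c * \<psi> x)"
  unfolding smooth_on_def
proof (intro allI impI)
  fix vs :: "'a list" assume vs: "set vs \<subseteq> Basis"
  have "(\<lambda>x. a * iter_pd vs \<phi> x + c * iter_pd vs \<psi> x) differentiable_on UNIV"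
    using smooth_diff[OF assms(1) vs] smooth_diff[OF assms(2) vs]
    unfolding differentiable_on_def by (auto intro!: derivative_intros)
  then show "iter_pd vs (\<lambda>x. a * \<phi> x + c * \<psi> x) differentiable_on UNIV"
    by (simp add: iter_pd_lincomb[OF assms vs])
qed

lemma test_lincomb:
  assumes A: "test_fun \<Omega> \<phi>" and B: "test_fun \<Omega> \<psi>"
  shows "test_fun \<Omega> (\<lambda>x. a * \<phi> x + c * \<psi> x)"
proof -
  let ?S = "closure {x. a * \<phi> x + c * \<psi> x \<noteq> 0}"
  let ?U = "closure {x. \<phi> x \<noteq> 0} \<union> closure {x. \<psi> x \<noteq> 0}"
  have s0: "{x. a * \<phi> x + c * \<psi> x \<noteq> 0} \<subseteq> {x. \<phi> x \<noteq> 0} \<union> {x. \<psi> x \<noteq> 0}" by auto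
  have sub: "?S \<subseteq> ?U"
  proof -
    have "?S \<subseteq> closure ({x. \<phi> x \<noteq> 0} \<union> {x. \<psi> x \<noteq> 0})" by (rule closure_mono[OF s0])
    then show ?thesis by (simp add: closure_Un)
  qed
  have cU: "compact ?U"
    using A B unfolding test_fun_def by (intro compact_Un) auto
  have eq: "?S = ?U \<inter> ?S" using sub by blast
  have cS: "compact ?S" by (subst eq, rule compact_Int_closed[OF cU closed_closure])
  have "?U \<subseteq> \<Omega>" using A B unfolding test_fun_def by auto
  then have "?S \<subseteq> \<Omega>" using sub by (rule order_trans[rotated])
  moreover have "smooth_on UNIV (\<lambda>x. a * \<phi> x + c * \<psi> x)"
    using A B unfolding test_fun_def by (intro smooth_lincomb) auto
  ultimately show ?thesis using cS unfolding test_fun_def by blast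
qed

lemma test_scale:
  assumes "test_fun \<Omega> \<phi>"
  shows "test_fun \<Omega> (\<lambda>x. c * \<phi> x)"
  using test_lincomb[OF assms assms, of c 0] by simp

lemma grad_lincomb:
  assumes "smooth_on UNIV \<phi>" "smooth_on UNIV \<psi>"
  shows "grad (\<lambda>x. a * \<phi> x + c * \<psi> x) x = a *\<^sub>R grad \<phi> x + c *\<^sub>R grad \<psi> x"
  using smooth_diff[OF assms(1), of "[]"] smooth_diff[OF assms(2), of "[]"]
  by (simp add: grad_def fd_lincomb scaleR_sum_right scaleR_add_left sum.distrib)

lemma grad_inner_basis:
  fixes \<phi> :: "'a::euclidean_space \<Rightarrow> real"
  assumes "b \<in> Basis"
  shows "grad \<phi> x \<bullet> b = frechet_derivative \<phi> (at x) b"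
  using assms by (simp add: grad_def inner_sum_left inner_Basis if_distrib sum.If_cases cong: if_cong)


lemma fd_zero_open:
  fixes F :: "'a::euclidean_space \<Rightarrow> real"
  assumes "open U" "x \<in> U" "\<And>y. y \<in> U \<Longrightarrow> F y = 0"
  shows "frechet_derivative F (at x) = (\<lambda>_. 0)"
proof -
  have "((\<lambda>_. 0::real) has_derivative (\<lambda>_. 0)) (at x)" by simp
  then have "(F has_derivative (\<lambda>_. 0)) (at x)"
    by (rule has_derivative_transform_within_open[OF _ assms(1,2)]) (use assms(3) in auto)
  then show ?thesis by (rule frechet_derivative_at[symmetric])
qed

lemma deriv_zero_outside:
  fixes F :: "'a::euclidean_space \<Rightarrow> real"
  assumes "(F has_derivative F') (at x)" "closed K" "x \<notin> K" "\<And>y. y \<notin> K \<Longrightarrow> F y = 0"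
  shows "F' h = 0"
proof -
  have "F' = frechet_derivative F (at x)" using assms(1) by (rule frechet_derivative_at)
  also have "\<dots> = (\<lambda>_. 0)" using assms by (intro fd_zero_open[of "- K"]) auto
  finally show ?thesis by simp
qed

lemma cc_integrable:
  fixes F :: "'a::euclidean_space \<Rightarrow> real"
  assumes "continuous_on UNIV F" "compact K" "\<And>x. x \<notin> K \<Longrightarrow> F x = 0"
  shows "integrable lborel F"
proof -
  have "integrable lborel (\<lambda>x. indicator K x *\<^sub>R F x)"
    using assms by (intro borel_integrable_compact) (auto intro: continuous_on_subset)
  moreover have "(\<lambda>x. indicator K x *\<^sub>R F x) = F" using assms(3) by (intro ext) (auto simp: indicator_def)
  ultimately show ?thesis by simp
qed

lemma cc_bounded:
  fixes F :: "'a::euclidean_space \<Rightarrow> real"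
  assumes "continuous_on UNIV F" "compact K" "\<And>x. x \<notin> K \<Longrightarrow> F x = 0"
  shows "\<exists>B. \<forall>x. \<bar>F x\<bar> \<le> B"
proof -
  have "compact (F ` K)" using assms by (intro compact_continuous_image) (auto intro: continuous_on_subset)
  then obtain B0 where B0: "\<forall>y\<in>F ` K. norm y \<le> B0" using compact_imp_bounded bounded_iff by metis
  have "\<bar>F x\<bar> \<le> max B0 0" for x using B0 assms(3) by (cases "x \<in> K") force+
  then show ?thesis by blast
qed

lemma ibp_lborel:
  fixes f g :: "'a::euclidean_space \<Rightarrow> real"
  assumes df: "\<And>x. (f has_derivative f' x) (at x)" and dg: "\<And>x. (g has_derivative g' x) (at x)"
    and cf: "continuous_on UNIV (\<lambda>x. f' x e)" and cg: "continuous_on UNIV (\<lambda>x. g' x e)"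
    and K: "compact K" "\<And>x. x \<notin> K \<Longrightarrow> f x = 0"
  shows "integrable lborel (\<lambda>x. f' x e * g x)" "integrable lborel (\<lambda>x. f x * g' x e)"
    "integral\<^sup>L lborel (\<lambda>x. f' x e * g x) = - integral\<^sup>L lborel (\<lambda>x. f x * g' x e)"
proof -
  have contf: "continuous_on UNIV f"
    using df by (meson continuous_at_imp_continuous_on has_derivative_continuous)
  have contg: "continuous_on UNIV g"
    using dg by (meson continuous_at_imp_continuous_on has_derivative_continuous)
  have f'0: "f' x e = 0" if "x \<notin> K" for x
    using deriv_zero_outside[OF df compact_imp_closed[OF K(1)] that K(2)] .
  show i1: "integrable lborel (\<lambda>x. f' x e * g x)"
    using K f'0 by (intro cc_integrable[of _ K]) (auto intro!: continuous_intros cf contg)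
  show i2: "integrable lborel (\<lambda>x. f x * g' x e)"
    using K by (intro cc_integrable[of _ K]) (auto intro!: continuous_intros cg contf)
  have dw: "((\<lambda>x. f x * g x) has_derivative (\<lambda>h. f' x h * g x + f x * g' x h)) (at x)" for x
    using df[of x] dg[of x] by (auto intro!: derivative_eq_intros)
  have "integral\<^sup>L lborel (\<lambda>x. f' x e * g x + f x * g' x e) = 0"
    by (rule ibp_core[OF dw, of e K]) (use K in \<open>auto intro!: continuous_intros cf cg contf contg\<close>)
  then show "integral\<^sup>L lborel (\<lambda>x. f' x e * g x) = - integral\<^sup>L lborel (\<lambda>x. f x * g' x e)"
    using i1 i2 by simp
qed

lemma int_on_lborel:
  fixes F :: "'a::euclidean_space \<Rightarrow> real"
  assumes "\<Omega> \<in> sets lebesgue" "F \<in> borel_measurable borel" "\<And>x. x \<notin> \<Omega> \<Longrightarrow> F x = 0"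
  shows "integral\<^sup>L (lebesgue_on \<Omega>) F = integral\<^sup>L lborel F"
    "integrable lborel F \<Longrightarrow> integrable (lebesgue_on \<Omega>) F"
proof -
  have eq: "(\<lambda>x. indicator \<Omega> x * F x) = F" using assms(3) by (intro ext) (auto simp: indicator_def)
  have "integral\<^sup>L (lebesgue_on \<Omega>) F = integral\<^sup>L lebesgue F"
    using assms(1) by (subst integral_restrict_space) (auto simp: eq)
  also have "\<dots> = integral\<^sup>L lborel F" using assms(2) by (intro integral_completion) simp
  finally show "integral\<^sup>L (lebesgue_on \<Omega>) F = integral\<^sup>L lborel F" .
  assume "integrable lborel F"
  then have "integrable lebesgue F" using assms(2) by (subst integrable_completion) auto
  then show "integrable (lebesgue_on \<Omega>) F"
    using assms(1) by (subst integrable_restrict_space) (auto simp: eq)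
qed

definition supp :: "('a::euclidean_space \<Rightarrow> real) \<Rightarrow> 'a set" where
  "supp \<phi> = closure {x. \<phi> x \<noteq> 0}"

lemma test_props:
  assumes "test_fun \<Omega> \<phi>"
  shows "compact (supp \<phi>)" "supp \<phi> \<subseteq> \<Omega>" "smooth_on UNIV \<phi>"
  using assms by (auto simp: test_fun_def supp_def)

lemma test_iter_zero:
  assumes "test_fun \<Omega> \<phi>" "set vs \<subseteq> Basis" "x \<notin> supp \<phi>"
  shows "iter_pd vs \<phi> x = 0"
  using assms(2,3)
proof (induction vs arbitrary: x)
  case Nil then show ?case by (auto simp: supp_def intro: closure_subset[THEN subsetD])
next
  case (Cons v vs)
  have "frechet_derivative (iter_pd vs \<phi>) (at x) = (\<lambda>_. 0)"
    using Cons by (intro fd_zero_open[of "- supp \<phi>"]) (auto simp: supp_def)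
  then show ?case by simp
qed

lemma test_iter_cont:
  assumes "test_fun \<Omega> \<phi>" "set vs \<subseteq> Basis"
  shows "continuous_on UNIV (iter_pd vs \<phi>)"
  using smooth_diff[OF test_props(3)[OF assms(1)] assms(2)]
  by (meson continuous_at_imp_continuous_on differentiable_imp_continuous_within)

lemma test_iter_deriv:
  assumes "test_fun \<Omega> \<phi>" "set vs \<subseteq> Basis"
  shows "(iter_pd vs \<phi> has_derivative (\<lambda>h. frechet_derivative (iter_pd vs \<phi>) (at x) h)) (at x)"
  using fd_works[OF smooth_diff[OF test_props(3)[OF assms(1)] assms(2)]] by simp

lemma test_iter_bounded:
  assumes "test_fun \<Omega> \<phi>" "set vs \<subseteq> Basis"
  shows "\<exists>B. \<forall>x. \<bar>iter_pd vs \<phi> x\<bar> \<le> B"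
  using test_iter_cont[OF assms] test_props(1)[OF assms(1)] test_iter_zero[OF assms]
  by (intro cc_bounded) auto

lemma test_iter_meas:
  assumes "test_fun \<Omega> \<phi>" "set vs \<subseteq> Basis"
  shows "iter_pd vs \<phi> \<in> borel_measurable borel"
  using test_iter_cont[OF assms] by (rule borel_measurable_continuous_onI)


definition pd :: "'a::euclidean_space \<Rightarrow> ('a \<Rightarrow> real) \<Rightarrow> 'a \<Rightarrow> real" where
  "pd b \<phi> x = frechet_derivative \<phi> (at x) b"

definition lapl :: "('a::euclidean_space \<Rightarrow> real) \<Rightarrow> 'a \<Rightarrow> real" where
  "lapl \<zeta> x = (\<Sum>b\<in>Basis. iter_pd [b, b] \<zeta> x)"

lemma pd_iter: "pd b \<phi> = iter_pd [b] \<phi>"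
  by (simp add: pd_def fun_eq_iff)

lemma grad_inner_pd:
  fixes \<phi> \<zeta> :: "'a::euclidean_space \<Rightarrow> real"
  shows "grad \<phi> x \<bullet> grad \<zeta> x = (\<Sum>b\<in>Basis. pd b \<phi> x * pd b \<zeta> x)"
proof -
  have "grad \<phi> x \<bullet> grad \<zeta> x = (\<Sum>b\<in>Basis. (grad \<phi> x \<bullet> b) * (grad \<zeta> x \<bullet> b))"
    by (rule euclidean_inner)
  also have "\<dots> = (\<Sum>b\<in>Basis. pd b \<phi> x * pd b \<zeta> x)"
    by (intro sum.cong refl) (simp add: grad_inner_basis pd_def)
  finally show ?thesis .
qed

lemma norm_grad_sq:
  fixes \<phi> :: "'a::euclidean_space \<Rightarrow> real"
  shows "(norm (grad \<phi> x))\<^sup>2 = (\<Sum>b\<in>Basis. (pd b \<phi> x)\<^sup>2)"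
  unfolding power2_norm_eq_inner grad_inner_pd by (simp add: power2_eq_square)

lemma pd_le_grad:
  fixes \<phi> :: "'a::euclidean_space \<Rightarrow> real"
  assumes "b \<in> Basis"
  shows "(pd b \<phi> x)\<^sup>2 \<le> (norm (grad \<phi> x))\<^sup>2"
proof -
  have "\<bar>pd b \<phi> x\<bar> \<le> norm (grad \<phi> x)"
    using Basis_le_norm[OF assms, of "grad \<phi> x"] grad_inner_basis[OF assms] by (simp add: pd_def)
  then show ?thesis by (metis abs_ge_zero power2_abs power_mono)
qed

lemma test_pd_cont:
  assumes "test_fun \<Omega> \<phi>" "b \<in> Basis"
  shows "continuous_on UNIV (pd b \<phi>)"
  using test_iter_cont[OF assms(1), of "[b]"] assms(2) by (simp add: pd_iter)

lemma test_pd_zero: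
  assumes "test_fun \<Omega> \<phi>" "b \<in> Basis" "x \<notin> supp \<phi>"
  shows "pd b \<phi> x = 0"
  using test_iter_zero[OF assms(1), of "[b]"] assms(2,3) by (simp add: pd_iter)

lemma test_cont:
  assumes "test_fun \<Omega> \<phi>"
  shows "continuous_on UNIV \<phi>"
  using test_iter_cont[OF assms(1), of "[]"] by simp

lemma test_zero:
  assumes "test_fun \<Omega> \<phi>" "x \<notin> supp \<phi>"
  shows "\<phi> x = 0"
  using test_iter_zero[OF assms(1), of "[]"] assms(2) by simp

lemma test_deriv:
  assumes "test_fun \<Omega> \<phi>"
  shows "(\<phi> has_derivative frechet_derivative \<phi> (at x)) (at x)"
  using test_iter_deriv[OF assms, of "[]"] by simp

lemma test_grad_cont:
  assumes "test_fun \<Omega> \<phi>"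
  shows "continuous_on UNIV (grad \<phi>)"
proof -
  have "grad \<phi> = (\<lambda>x. \<Sum>b\<in>Basis. pd b \<phi> x *\<^sub>R b)" by (simp add: grad_def pd_def fun_eq_iff)
  moreover have "continuous_on UNIV (\<lambda>x. \<Sum>b\<in>Basis. pd b \<phi> x *\<^sub>R b)"
    using test_pd_cont[OF assms] by (intro continuous_intros) auto
  ultimately show ?thesis by simp
qed

lemma test_grad_zero:
  assumes "test_fun \<Omega> \<phi>" "x \<notin> supp \<phi>"
  shows "grad \<phi> x = 0"
  using test_pd_zero[OF assms(1) _ assms(2)] by (simp add: grad_def pd_def)

lemma test_lapl_cont:
  assumes "test_fun \<Omega> \<zeta>"
  shows "continuous_on UNIV (lapl \<zeta>)"
proof -
  have c: "continuous_on UNIV (iter_pd [b, b] \<zeta>)" if "b \<in> Basis" for b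
    using test_iter_cont[OF assms, of "[b,b]"] that by simp
  have "continuous_on UNIV (\<lambda>x. \<Sum>b\<in>Basis. iter_pd [b, b] \<zeta> x)"
    by (intro continuous_on_sum) (use c in auto)
  then show ?thesis by (simp add: lapl_def[abs_def])
qed

lemma test_lapl_zero:
  assumes "test_fun \<Omega> \<zeta>" "x \<notin> supp \<zeta>"
  shows "lapl \<zeta> x = 0"
proof -
  have "iter_pd [b, b] \<zeta> x = 0" if "b \<in> Basis" for b
    using test_iter_zero[OF assms(1) _ assms(2), of "[b,b]"] that by simp
  then show ?thesis unfolding lapl_def by (intro sum.neutral) auto
qed

context
  fixes \<Omega> :: "'a::euclidean_space set"
  assumes \<Omega>o: "open \<Omega>" and \<Omega>b: "bounded \<Omega>"
begin

lemma \<Omega>leb: "\<Omega> \<in> sets lebesgue"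
  using \<Omega>o by simp

lemma cc_M:
  fixes F :: "'a \<Rightarrow> real"
  assumes "test_fun \<Omega> \<phi>" "continuous_on UNIV F" "\<And>x. x \<notin> supp \<phi> \<Longrightarrow> F x = 0"
  shows "integrable (lebesgue_on \<Omega>) F" "integrable lborel F"
    "integral\<^sup>L (lebesgue_on \<Omega>) F = integral\<^sup>L lborel F"
proof -
  have meas: "F \<in> borel_measurable borel" using assms(2) by (rule borel_measurable_continuous_onI)
  have z: "F x = 0" if "x \<notin> \<Omega>" for x using assms(3) test_props(2)[OF assms(1)] that by auto
  show il: "integrable lborel F" using assms test_props(1)[OF assms(1)] by (intro cc_integrable) auto
  show "integrable (lebesgue_on \<Omega>) F" using int_on_lborel(2)[OF \<Omega>leb meas z il] .
  show "integral\<^sup>L (lebesgue_on \<Omega>) F = integral\<^sup>L lborel F" using int_on_lborel(1)[OF \<Omega>leb meas z] .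
qed

lemma ibp_test:
  assumes \<phi>: "test_fun \<Omega> \<phi>" and \<zeta>: "test_fun \<Omega> \<zeta>" and b: "b \<in> Basis"
  shows "integral\<^sup>L (lebesgue_on \<Omega>) (\<lambda>x. pd b \<phi> x * pd b \<zeta> x)
        = - integral\<^sup>L (lebesgue_on \<Omega>) (\<lambda>x. \<phi> x * iter_pd [b, b] \<zeta> x)"
proof -
  have "integral\<^sup>L lborel (\<lambda>x. frechet_derivative \<phi> (at x) b * iter_pd [b] \<zeta> x)
     = - integral\<^sup>L lborel (\<lambda>x. \<phi> x * frechet_derivative (iter_pd [b] \<zeta>) (at x) b)"
    apply (rule ibp_lborel(3)[OF test_deriv[OF \<phi>] test_iter_deriv[OF \<zeta>, of "[b]"], of b "supp \<phi>"])
    using b test_pd_cont[OF \<phi> b] test_iter_cont[OF \<zeta>, of "[b,b]"] test_props(1)[OF \<phi>] test_zero[OF \<phi>]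
    by (auto simp: pd_def[abs_def])
  moreover have "integral\<^sup>L (lebesgue_on \<Omega>) (\<lambda>x. pd b \<phi> x * pd b \<zeta> x)
      = integral\<^sup>L lborel (\<lambda>x. pd b \<phi> x * pd b \<zeta> x)"
    using test_pd_cont[OF \<phi> b] test_pd_cont[OF \<zeta> b] test_pd_zero[OF \<phi> b]
    by (intro cc_M(3)[OF \<phi>]) (auto intro!: continuous_intros)
  moreover have "integral\<^sup>L (lebesgue_on \<Omega>) (\<lambda>x. \<phi> x * iter_pd [b, b] \<zeta> x)
      = integral\<^sup>L lborel (\<lambda>x. \<phi> x * iter_pd [b, b] \<zeta> x)"
    using test_cont[OF \<phi>] test_iter_cont[OF \<zeta>, of "[b,b]"] b test_zero[OF \<phi>]
    by (intro cc_M(3)[OF \<phi>]) (auto intro!: continuous_intros)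
  ultimately show ?thesis by (simp add: pd_def)
qed

lemma ibp_grad:
  assumes \<phi>: "test_fun \<Omega> \<phi>" and \<zeta>: "test_fun \<Omega> \<zeta>"
  shows "integral\<^sup>L (lebesgue_on \<Omega>) (\<lambda>x. grad \<phi> x \<bullet> grad \<zeta> x)
        = - integral\<^sup>L (lebesgue_on \<Omega>) (\<lambda>x. \<phi> x * lapl \<zeta> x)"
proof -
  have i1: "integrable (lebesgue_on \<Omega>) (\<lambda>x. pd b \<phi> x * pd b \<zeta> x)" if b: "b \<in> Basis" for b
    using test_pd_cont[OF \<phi> b] test_pd_cont[OF \<zeta> b] test_pd_zero[OF \<phi> b]
    by (intro cc_M(1)[OF \<phi>]) (auto intro!: continuous_intros)
  have i2: "integrable (lebesgue_on \<Omega>) (\<lambda>x. \<phi> x * iter_pd [b, b] \<zeta> x)" if b: "b \<in> Basis" for b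
    using test_cont[OF \<phi>] test_iter_cont[OF \<zeta>, of "[b,b]"] b test_zero[OF \<phi>]
    by (intro cc_M(1)[OF \<phi>]) (auto intro!: continuous_intros)
  have "integral\<^sup>L (lebesgue_on \<Omega>) (\<lambda>x. grad \<phi> x \<bullet> grad \<zeta> x)
      = (\<Sum>b\<in>Basis. integral\<^sup>L (lebesgue_on \<Omega>) (\<lambda>x. pd b \<phi> x * pd b \<zeta> x))"
    by (simp add: grad_inner_pd integral_sum i1)
  also have "\<dots> = (\<Sum>b\<in>Basis. - integral\<^sup>L (lebesgue_on \<Omega>) (\<lambda>x. \<phi> x * iter_pd [b, b] \<zeta> x))"
    using ibp_test[OF \<phi> \<zeta>] by simp
  also have "\<dots> = - integral\<^sup>L (lebesgue_on \<Omega>) (\<lambda>x. \<phi> x * lapl \<zeta> x)"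
  proof -
    have "integral\<^sup>L (lebesgue_on \<Omega>) (\<lambda>x. \<Sum>b\<in>Basis. \<phi> x * iter_pd [b, b] \<zeta> x)
       = (\<Sum>b\<in>Basis. integral\<^sup>L (lebesgue_on \<Omega>) (\<lambda>x. \<phi> x * iter_pd [b, b] \<zeta> x))"
      by (rule Bochner_Integration.integral_sum[OF i2])
    moreover have "(\<lambda>x. \<phi> x * lapl \<zeta> x) = (\<lambda>x. \<Sum>b\<in>Basis. \<phi> x * iter_pd [b, b] \<zeta> x)"
      unfolding lapl_def by (simp only: sum_distrib_left)
    ultimately show ?thesis by (simp only: sum_negf)
  qed
  finally show ?thesis .
qed

end


definition L2 :: "'x measure \<Rightarrow> ('x \<Rightarrow> 'b::euclidean_space) \<Rightarrow> bool" where
  "L2 M f \<longleftrightarrow> f \<in> borel_measurable M \<and> integrable M (\<lambda>x. (norm (f x))\<^sup>2)"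

lemma L2_inner_meas:
  fixes f g :: "'x \<Rightarrow> 'b::euclidean_space"
  assumes "f \<in> borel_measurable M" "g \<in> borel_measurable M"
  shows "(\<lambda>x. f x \<bullet> g x) \<in> borel_measurable M"
  using assms by (rule borel_measurable_inner)

lemma L2_inner:
  fixes f g :: "'x \<Rightarrow> 'b::euclidean_space"
  assumes "L2 M f" "L2 M g"
  shows "integrable M (\<lambda>x. f x \<bullet> g x)"
proof (rule Bochner_Integration.integrable_bound)
  show "integrable M (\<lambda>x. (norm (f x))\<^sup>2 + (norm (g x))\<^sup>2)"
    using assms unfolding L2_def by auto
  show "(\<lambda>x. f x \<bullet> g x) \<in> borel_measurable M"
    using assms unfolding L2_def by (intro L2_inner_meas) auto
  show "AE x in M. norm (f x \<bullet> g x) \<le> norm ((norm (f x))\<^sup>2 + (norm (g x))\<^sup>2)"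
  proof (intro AE_I2)
    fix x
    have "\<bar>f x \<bullet> g x\<bar> \<le> norm (f x) * norm (g x)" by (rule Cauchy_Schwarz_ineq2)
    also have "\<dots> \<le> (norm (f x))\<^sup>2 + (norm (g x))\<^sup>2"
    proof -
      have h: "2 * (norm (f x) * norm (g x)) \<le> (norm (f x))\<^sup>2 + (norm (g x))\<^sup>2"
        using sum_squares_bound[of "norm (f x)" "norm (g x)"] by (simp add: mult.assoc)
      have "0 \<le> norm (f x) * norm (g x)" by simp
      then show ?thesis using h by linarith
    qed
    finally show "norm (f x \<bullet> g x) \<le> norm ((norm (f x))\<^sup>2 + (norm (g x))\<^sup>2)" by simp
  qed
qed

lemma norm_lincomb_sq:
  fixes u v :: "'b::euclidean_space"
  shows "(norm (a *\<^sub>R u + c *\<^sub>R v))\<^sup>2 = a\<^sup>2 * (norm u)\<^sup>2 + 2 * a * c * (u \<bullet> v) + c\<^sup>2 * (norm v)\<^sup>2"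
  unfolding power2_norm_eq_inner by (simp add: inner_add_left inner_add_right inner_commute[of v u] algebra_simps power2_eq_square)

lemma L2_lincomb:
  fixes f g :: "'x \<Rightarrow> 'b::euclidean_space"
  assumes "L2 M f" "L2 M g"
  shows "L2 M (\<lambda>x. a *\<^sub>R f x + c *\<^sub>R g x)"
proof -
  have "integrable M (\<lambda>x. a\<^sup>2 * (norm (f x))\<^sup>2 + 2 * a * c * (f x \<bullet> g x) + c\<^sup>2 * (norm (g x))\<^sup>2)"
    using assms L2_inner[OF assms] unfolding L2_def by auto
  then have "integrable M (\<lambda>x. (norm (a *\<^sub>R f x + c *\<^sub>R g x))\<^sup>2)"
    by (simp only: norm_lincomb_sq)
  moreover have "(\<lambda>x. a *\<^sub>R f x + c *\<^sub>R g x) \<in> borel_measurable M"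
    using assms unfolding L2_def by (intro borel_measurable_add borel_measurable_scaleR) auto
  ultimately show ?thesis unfolding L2_def by simp
qed

lemma L2_diff:
  fixes f g :: "'x \<Rightarrow> 'b::euclidean_space"
  assumes "L2 M f" "L2 M g"
  shows "L2 M (\<lambda>x. f x - g x)"
  using L2_lincomb[OF assms, of 1 "-1"] by simp

lemma L2_int_lincomb:
  fixes f g :: "'x \<Rightarrow> 'b::euclidean_space"
  assumes "L2 M f" "L2 M g"
  shows "integral\<^sup>L M (\<lambda>x. (norm (a *\<^sub>R f x + c *\<^sub>R g x))\<^sup>2)
    = a\<^sup>2 * integral\<^sup>L M (\<lambda>x. (norm (f x))\<^sup>2) + 2 * a * c * integral\<^sup>L M (\<lambda>x. f x \<bullet> g x)
      + c\<^sup>2 * integral\<^sup>L M (\<lambda>x. (norm (g x))\<^sup>2)"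
  using assms L2_inner[OF assms] unfolding L2_def by (simp add: norm_lincomb_sq)

lemma quad_disc:
  fixes A B C :: real
  assumes "\<And>t. 0 \<le> A - 2 * t * B + t\<^sup>2 * C" "C \<ge> 0"
  shows "B\<^sup>2 \<le> A * C"
proof (cases "C = 0")
  case True
  have "B = 0"
  proof (rule ccontr)
    assume "B \<noteq> 0"
    have "0 \<le> A - 2 * ((A + 1) / (2 * B)) * B" using assms(1)[of "(A + 1) / (2 * B)"] True by simp
    also have "\<dots> = -1" using \<open>B \<noteq> 0\<close> by (simp add: field_simps)
    finally show False by simp
  qed
  then show ?thesis using True by simp
next
  case False
  then have C: "C > 0" using assms(2) by simp
  have "0 \<le> A - 2 * (B / C) * B + (B / C)\<^sup>2 * C" by (rule assms(1))
  also have "\<dots> = (A * C - B\<^sup>2) / C" using C by (simp add: field_simps power2_eq_square)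
  finally have "0 \<le> (A * C - B\<^sup>2) / C" .
  then show ?thesis using C by (simp add: zero_le_divide_iff)
qed

lemma L2_CS:
  fixes f g :: "'x \<Rightarrow> 'b::euclidean_space"
  assumes "L2 M f" "L2 M g"
  shows "(integral\<^sup>L M (\<lambda>x. f x \<bullet> g x))\<^sup>2 \<le> integral\<^sup>L M (\<lambda>x. (norm (f x))\<^sup>2) * integral\<^sup>L M (\<lambda>x. (norm (g x))\<^sup>2)"
proof (rule quad_disc)
  fix t :: real
  have "0 \<le> integral\<^sup>L M (\<lambda>x. (norm (1 *\<^sub>R f x + (-t) *\<^sub>R g x))\<^sup>2)"
    by (rule integral_nonneg_AE) auto
  also have "\<dots> = integral\<^sup>L M (\<lambda>x. (norm (f x))\<^sup>2) - 2 * t * integral\<^sup>L M (\<lambda>x. f x \<bullet> g x) + t\<^sup>2 * integral\<^sup>L M (\<lambda>x. (norm (g x))\<^sup>2)"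
    using L2_int_lincomb[OF assms, of 1 "-t"] by simp
  finally show "0 \<le> integral\<^sup>L M (\<lambda>x. (norm (f x))\<^sup>2) - 2 * t * integral\<^sup>L M (\<lambda>x. f x \<bullet> g x) + t\<^sup>2 * integral\<^sup>L M (\<lambda>x. (norm (g x))\<^sup>2)" .
qed (rule integral_nonneg_AE, auto)

lemma L2_CS_abs:
  fixes f g :: "'x \<Rightarrow> 'b::euclidean_space"
  assumes "L2 M f" "L2 M g"
  shows "\<bar>integral\<^sup>L M (\<lambda>x. f x \<bullet> g x)\<bar> \<le> sqrt (integral\<^sup>L M (\<lambda>x. (norm (f x))\<^sup>2)) * sqrt (integral\<^sup>L M (\<lambda>x. (norm (g x))\<^sup>2))"
proof -
  have "\<bar>integral\<^sup>L M (\<lambda>x. f x \<bullet> g x)\<bar> = sqrt ((integral\<^sup>L M (\<lambda>x. f x \<bullet> g x))\<^sup>2)" by simp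
  also have "\<dots> \<le> sqrt (integral\<^sup>L M (\<lambda>x. (norm (f x))\<^sup>2) * integral\<^sup>L M (\<lambda>x. (norm (g x))\<^sup>2))"
    using L2_CS[OF assms] by (rule real_sqrt_le_mono)
  finally show ?thesis by (simp add: real_sqrt_mult)
qed

lemma conv_inner0:
  fixes d :: "nat \<Rightarrow> 'x \<Rightarrow> 'b::euclidean_space"
  assumes "\<And>n. L2 M (d n)" "L2 M g" "(\<lambda>n. integral\<^sup>L M (\<lambda>x. (norm (d n x))\<^sup>2)) \<longlonglongrightarrow> 0"
  shows "(\<lambda>n. integral\<^sup>L M (\<lambda>x. d n x \<bullet> g x)) \<longlonglongrightarrow> 0"
proof (rule Lim_null_comparison)
  show "\<forall>\<^sub>F n in sequentially. norm (integral\<^sup>L M (\<lambda>x. d n x \<bullet> g x)) \<le>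
     sqrt (integral\<^sup>L M (\<lambda>x. (norm (d n x))\<^sup>2)) * sqrt (integral\<^sup>L M (\<lambda>x. (norm (g x))\<^sup>2))"
    using L2_CS_abs[OF assms(1) assms(2)] by simp
  show "(\<lambda>n. sqrt (integral\<^sup>L M (\<lambda>x. (norm (d n x))\<^sup>2)) * sqrt (integral\<^sup>L M (\<lambda>x. (norm (g x))\<^sup>2))) \<longlonglongrightarrow> 0"
    using tendsto_real_sqrt[OF assms(3)] by (auto intro: tendsto_mult_left_zero)
qed

lemma conv_inner:
  fixes f :: "nat \<Rightarrow> 'x \<Rightarrow> 'b::euclidean_space"
  assumes "\<And>n. L2 M (f n)" "L2 M F" "L2 M g"
    "(\<lambda>n. integral\<^sup>L M (\<lambda>x. (norm (f n x - F x))\<^sup>2)) \<longlonglongrightarrow> 0"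
  shows "(\<lambda>n. integral\<^sup>L M (\<lambda>x. f n x \<bullet> g x)) \<longlonglongrightarrow> integral\<^sup>L M (\<lambda>x. F x \<bullet> g x)"
proof -
  have L: "L2 M (\<lambda>x. f n x - F x)" for n using L2_diff[OF assms(1) assms(2)] .
  have "(\<lambda>n. integral\<^sup>L M (\<lambda>x. (f n x - F x) \<bullet> g x)) \<longlonglongrightarrow> 0"
    using conv_inner0[of M "\<lambda>n x. f n x - F x", OF L assms(3,4)] .
  then have "(\<lambda>n. integral\<^sup>L M (\<lambda>x. (f n x - F x) \<bullet> g x) + integral\<^sup>L M (\<lambda>x. F x \<bullet> g x))
     \<longlonglongrightarrow> 0 + integral\<^sup>L M (\<lambda>x. F x \<bullet> g x)" by (intro tendsto_add) auto
  moreover have "integral\<^sup>L M (\<lambda>x. (f n x - F x) \<bullet> g x) + integral\<^sup>L M (\<lambda>x. F x \<bullet> g x)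
      = integral\<^sup>L M (\<lambda>x. f n x \<bullet> g x)" for n
    using L2_inner[OF assms(1) assms(3)] L2_inner[OF assms(2,3)] by (simp add: inner_diff_left)
  ultimately show ?thesis by simp
qed

lemma conv_norm:
  fixes f :: "nat \<Rightarrow> 'x \<Rightarrow> 'b::euclidean_space"
  assumes "\<And>n. L2 M (f n)" "L2 M F"
    "(\<lambda>n. integral\<^sup>L M (\<lambda>x. (norm (f n x - F x))\<^sup>2)) \<longlonglongrightarrow> 0"
  shows "(\<lambda>n. integral\<^sup>L M (\<lambda>x. (norm (f n x))\<^sup>2)) \<longlonglongrightarrow> integral\<^sup>L M (\<lambda>x. (norm (F x))\<^sup>2)"
proof -
  have L: "L2 M (\<lambda>x. f n x - F x)" for n using L2_diff[OF assms(1) assms(2)] .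
  have eq: "integral\<^sup>L M (\<lambda>x. (norm (f n x))\<^sup>2) =
     integral\<^sup>L M (\<lambda>x. (norm (f n x - F x))\<^sup>2) + 2 * integral\<^sup>L M (\<lambda>x. (f n x - F x) \<bullet> F x)
     + integral\<^sup>L M (\<lambda>x. (norm (F x))\<^sup>2)" for n
    using L2_int_lincomb[OF L[of n] assms(2), where a=1 and c=1] by simp
  have "(\<lambda>n. integral\<^sup>L M (\<lambda>x. (norm (f n x - F x))\<^sup>2) + 2 * integral\<^sup>L M (\<lambda>x. (f n x - F x) \<bullet> F x)
     + integral\<^sup>L M (\<lambda>x. (norm (F x))\<^sup>2)) \<longlonglongrightarrow> 0 + 2 * 0 + integral\<^sup>L M (\<lambda>x. (norm (F x))\<^sup>2)"
    using conv_inner0[of M "\<lambda>n x. f n x - F x", OF L assms(2,3)] assms(3)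
    by (intro tendsto_intros) auto
  then show ?thesis by (simp add: eq)
qed


lemma conv_lincomb0:
  fixes X Y :: "nat \<Rightarrow> 'x \<Rightarrow> 'b::euclidean_space"
  assumes "\<And>n. L2 M (X n)" "\<And>n. L2 M (Y n)"
    "(\<lambda>n. integral\<^sup>L M (\<lambda>x. (norm (X n x))\<^sup>2)) \<longlonglongrightarrow> 0"
    "(\<lambda>n. integral\<^sup>L M (\<lambda>x. (norm (Y n x))\<^sup>2)) \<longlonglongrightarrow> 0"
  shows "(\<lambda>n. integral\<^sup>L M (\<lambda>x. (norm (a *\<^sub>R X n x + c *\<^sub>R Y n x))\<^sup>2)) \<longlonglongrightarrow> 0"
proof -
  have xy: "(\<lambda>n. integral\<^sup>L M (\<lambda>x. X n x \<bullet> Y n x)) \<longlonglongrightarrow> 0"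
  proof (rule Lim_null_comparison)
    show "\<forall>\<^sub>F n in sequentially. norm (integral\<^sup>L M (\<lambda>x. X n x \<bullet> Y n x)) \<le>
       sqrt (integral\<^sup>L M (\<lambda>x. (norm (X n x))\<^sup>2)) * sqrt (integral\<^sup>L M (\<lambda>x. (norm (Y n x))\<^sup>2))"
      using L2_CS_abs[OF assms(1) assms(2)] by simp
    show "(\<lambda>n. sqrt (integral\<^sup>L M (\<lambda>x. (norm (X n x))\<^sup>2)) * sqrt (integral\<^sup>L M (\<lambda>x. (norm (Y n x))\<^sup>2))) \<longlonglongrightarrow> 0"
      using tendsto_mult[OF tendsto_real_sqrt[OF assms(3)] tendsto_real_sqrt[OF assms(4)]] by simp
  qed
  have "(\<lambda>n. a\<^sup>2 * integral\<^sup>L M (\<lambda>x. (norm (X n x))\<^sup>2) + 2 * a * c * integral\<^sup>L M (\<lambda>x. X n x \<bullet> Y n x)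
      + c\<^sup>2 * integral\<^sup>L M (\<lambda>x. (norm (Y n x))\<^sup>2)) \<longlonglongrightarrow> a\<^sup>2 * 0 + 2 * a * c * 0 + c\<^sup>2 * 0"
    using assms(3,4) xy by (intro tendsto_intros)
  then show ?thesis by (simp add: L2_int_lincomb[OF assms(1) assms(2)])
qed


lemma real_norm_sq: "(norm (r::real))\<^sup>2 = r\<^sup>2" by simp

context
  fixes \<Omega> :: "'a::euclidean_space set"
  assumes \<Omega>o: "open \<Omega>" and \<Omega>b: "bounded \<Omega>"
begin

abbreviation "M \<equiv> lebesgue_on \<Omega>"

lemma cont_meas_M:
  fixes F :: "'a \<Rightarrow> 'b::euclidean_space"
  assumes "continuous_on UNIV F"
  shows "F \<in> borel_measurable M"
  using assms \<Omega>leb[OF \<Omega>o \<Omega>b] by (intro continuous_imp_measurable_on_sets_lebesgue) (auto intro: continuous_on_subset)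

lemma test_L2: "test_fun \<Omega> \<phi> \<Longrightarrow> L2 M \<phi>"
  unfolding L2_def using test_cont[of \<Omega> \<phi>] test_zero[of \<Omega> \<phi>]
  by (auto intro!: cont_meas_M cc_M(1)[OF \<Omega>o \<Omega>b, of \<phi>] continuous_intros)

lemma test_grad_L2: "test_fun \<Omega> \<phi> \<Longrightarrow> L2 M (grad \<phi>)"
  unfolding L2_def using test_grad_cont[of \<Omega> \<phi>] test_grad_zero[of \<Omega> \<phi>]
  by (auto intro!: cont_meas_M cc_M(1)[OF \<Omega>o \<Omega>b, of \<phi>] continuous_intros)

lemma test_lapl_L2: "test_fun \<Omega> \<zeta> \<Longrightarrow> L2 M (lapl \<zeta>)"
  unfolding L2_def using test_lapl_cont[of \<Omega> \<zeta>] test_lapl_zero[of \<Omega> \<zeta>]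
  by (auto intro!: cont_meas_M cc_M(1)[OF \<Omega>o \<Omega>b, of \<zeta>] continuous_intros)

lemma pairE:
  assumes "H01_pair \<Omega> u g"
  obtains \<phi> where "\<And>n. test_fun \<Omega> (\<phi> n)" "u \<in> borel_measurable M" "g \<in> borel_measurable M"
    "\<And>n. integrable M (\<lambda>x. (norm (\<phi> n x - u x))\<^sup>2)"
    "\<And>n. integrable M (\<lambda>x. (norm (grad (\<phi> n) x - g x))\<^sup>2)"
    "(\<lambda>n. integral\<^sup>L M (\<lambda>x. (norm (\<phi> n x - u x))\<^sup>2)) \<longlonglongrightarrow> 0"
    "(\<lambda>n. integral\<^sup>L M (\<lambda>x. (norm (grad (\<phi> n) x - g x))\<^sup>2)) \<longlonglongrightarrow> 0"
  using assms unfolding H01_pair_def real_norm_sq by blast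

lemma pair_L2:
  assumes "H01_pair \<Omega> u g"
  shows "L2 M u" "L2 M g"
proof -
  obtain \<phi> where \<phi>: "\<And>n. test_fun \<Omega> (\<phi> n)" "u \<in> borel_measurable M" "g \<in> borel_measurable M"
    "\<And>n. integrable M (\<lambda>x. (norm (\<phi> n x - u x))\<^sup>2)"
    "\<And>n. integrable M (\<lambda>x. (norm (grad (\<phi> n) x - g x))\<^sup>2)"
    "(\<lambda>n. integral\<^sup>L M (\<lambda>x. (norm (\<phi> n x - u x))\<^sup>2)) \<longlonglongrightarrow> 0"
    "(\<lambda>n. integral\<^sup>L M (\<lambda>x. (norm (grad (\<phi> n) x - g x))\<^sup>2)) \<longlonglongrightarrow> 0"
    by (rule pairE[OF assms], rule that, assumption+)
  have d1: "L2 M (\<lambda>x. \<phi> 0 x - u x)" unfolding L2_def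
    using borel_measurable_diff[OF test_L2[OF \<phi>(1), unfolded L2_def, THEN conjunct1] \<phi>(2)] \<phi>(4) by blast
  have "L2 M (\<lambda>x. \<phi> 0 x - (\<phi> 0 x - u x))" by (rule L2_diff[OF test_L2[OF \<phi>(1)] d1])
  then show "L2 M u" by simp
  have d2: "L2 M (\<lambda>x. grad (\<phi> 0) x - g x)" unfolding L2_def
    using borel_measurable_diff[OF test_grad_L2[OF \<phi>(1), unfolded L2_def, THEN conjunct1] \<phi>(3)] \<phi>(5) by blast
  have "L2 M (\<lambda>x. grad (\<phi> 0) x - (grad (\<phi> 0) x - g x))" by (rule L2_diff[OF test_grad_L2[OF \<phi>(1)] d2])
  then show "L2 M g" by simp
qed

lemma weak_ibp:
  assumes "H01_pair \<Omega> u g" "test_fun \<Omega> \<zeta>"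
  shows "integral\<^sup>L M (\<lambda>x. g x \<bullet> grad \<zeta> x) = - integral\<^sup>L M (\<lambda>x. u x * lapl \<zeta> x)"
proof -
  obtain \<phi> where \<phi>: "\<And>n. test_fun \<Omega> (\<phi> n)" "u \<in> borel_measurable M" "g \<in> borel_measurable M"
    "\<And>n. integrable M (\<lambda>x. (norm (\<phi> n x - u x))\<^sup>2)"
    "\<And>n. integrable M (\<lambda>x. (norm (grad (\<phi> n) x - g x))\<^sup>2)"
    "(\<lambda>n. integral\<^sup>L M (\<lambda>x. (norm (\<phi> n x - u x))\<^sup>2)) \<longlonglongrightarrow> 0"
    "(\<lambda>n. integral\<^sup>L M (\<lambda>x. (norm (grad (\<phi> n) x - g x))\<^sup>2)) \<longlonglongrightarrow> 0"
    by (rule pairE[OF assms(1)], rule that, assumption+)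
  have "(\<lambda>n. integral\<^sup>L M (\<lambda>x. grad (\<phi> n) x \<bullet> grad \<zeta> x)) \<longlonglongrightarrow> integral\<^sup>L M (\<lambda>x. g x \<bullet> grad \<zeta> x)"
    by (rule conv_inner[OF test_grad_L2[OF \<phi>(1)] pair_L2(2)[OF assms(1)] test_grad_L2[OF assms(2)] \<phi>(7)])
  moreover have "(\<lambda>n. integral\<^sup>L M (\<lambda>x. \<phi> n x \<bullet> lapl \<zeta> x)) \<longlonglongrightarrow> integral\<^sup>L M (\<lambda>x. u x \<bullet> lapl \<zeta> x)"
    by (rule conv_inner[OF test_L2[OF \<phi>(1)] pair_L2(1)[OF assms(1)] test_lapl_L2[OF assms(2)] \<phi>(6)])
  then have "(\<lambda>n. - integral\<^sup>L M (\<lambda>x. \<phi> n x * lapl \<zeta> x)) \<longlonglongrightarrow> - integral\<^sup>L M (\<lambda>x. u x * lapl \<zeta> x)"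
    by (intro tendsto_minus) simp
  then have "(\<lambda>n. integral\<^sup>L M (\<lambda>x. grad (\<phi> n) x \<bullet> grad \<zeta> x)) \<longlonglongrightarrow> - integral\<^sup>L M (\<lambda>x. u x * lapl \<zeta> x)"
    using ibp_grad[OF \<Omega>o \<Omega>b \<phi>(1) assms(2)] by simp
  ultimately show ?thesis by (rule LIMSEQ_unique)
qed

lemma pair_uniq:
  assumes g: "H01_pair \<Omega> u g" and h: "H01_pair \<Omega> u h"
  shows "AE x in M. g x = h x"
proof -
  have Lg: "L2 M g" and Lh: "L2 M h" using pair_L2 g h by auto
  define k where "k x = g x - h x" for x
  have Lk: "L2 M k" unfolding k_def using L2_diff[OF Lg Lh] .
  have orth: "integral\<^sup>L M (\<lambda>x. k x \<bullet> grad \<zeta> x) = 0" if \<zeta>: "test_fun \<Omega> \<zeta>" for \<zeta>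
  proof -
    have "integral\<^sup>L M (\<lambda>x. k x \<bullet> grad \<zeta> x) = integral\<^sup>L M (\<lambda>x. g x \<bullet> grad \<zeta> x) - integral\<^sup>L M (\<lambda>x. h x \<bullet> grad \<zeta> x)"
      using L2_inner[OF Lg test_grad_L2[OF \<zeta>]] L2_inner[OF Lh test_grad_L2[OF \<zeta>]]
      by (simp add: k_def inner_diff_left)
    then show ?thesis using weak_ibp[OF g \<zeta>] weak_ibp[OF h \<zeta>] by simp
  qed
  have zero: "integral\<^sup>L M (\<lambda>x. k x \<bullet> G x) = 0" if G: "H01_pair \<Omega> u G" for G
  proof -
    obtain \<phi> where \<phi>: "\<And>n. test_fun \<Omega> (\<phi> n)" "u \<in> borel_measurable M" "G \<in> borel_measurable M"
    "\<And>n. integrable M (\<lambda>x. (norm (\<phi> n x - u x))\<^sup>2)"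
    "\<And>n. integrable M (\<lambda>x. (norm (grad (\<phi> n) x - G x))\<^sup>2)"
    "(\<lambda>n. integral\<^sup>L M (\<lambda>x. (norm (\<phi> n x - u x))\<^sup>2)) \<longlonglongrightarrow> 0"
    "(\<lambda>n. integral\<^sup>L M (\<lambda>x. (norm (grad (\<phi> n) x - G x))\<^sup>2)) \<longlonglongrightarrow> 0"
      by (rule pairE[OF G], rule that, assumption+)
    have "(\<lambda>n. integral\<^sup>L M (\<lambda>x. grad (\<phi> n) x \<bullet> k x)) \<longlonglongrightarrow> integral\<^sup>L M (\<lambda>x. G x \<bullet> k x)"
      by (rule conv_inner[OF test_grad_L2[OF \<phi>(1)] pair_L2(2)[OF G] Lk \<phi>(7)])
    moreover have "integral\<^sup>L M (\<lambda>x. grad (\<phi> n) x \<bullet> k x) = 0" for n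
      using orth[OF \<phi>(1)[of n]] by (simp add: inner_commute)
    ultimately have "integral\<^sup>L M (\<lambda>x. G x \<bullet> k x) = 0" by (simp add: LIMSEQ_const_iff)
    then show ?thesis by (simp add: inner_commute)
  qed
  have "integral\<^sup>L M (\<lambda>x. (norm (k x))\<^sup>2) = integral\<^sup>L M (\<lambda>x. k x \<bullet> g x) - integral\<^sup>L M (\<lambda>x. k x \<bullet> h x)"
    using L2_inner[OF Lk Lg] L2_inner[OF Lk Lh]
    by (simp add: power2_norm_eq_inner k_def inner_diff_right)
  also have "\<dots> = 0" using zero[OF g] zero[OF h] by simp
  finally have "integral\<^sup>L M (\<lambda>x. (norm (k x))\<^sup>2) = 0" .
  then have "AE x in M. (norm (k x))\<^sup>2 = 0"
    using Lk unfolding L2_def by (subst (asm) integral_nonneg_eq_0_iff_AE) auto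
  then show ?thesis by eventually_elim (simp add: k_def)
qed

lemma hnorm_pair:
  assumes "H01_pair \<Omega> u g"
  shows "hnorm2 \<Omega> u = integral\<^sup>L M (\<lambda>x. (norm (g x))\<^sup>2)" "AE x in M. wgrad \<Omega> u x = g x"
    "H01_pair \<Omega> u (wgrad \<Omega> u)"
proof -
  show w: "H01_pair \<Omega> u (wgrad \<Omega> u)" unfolding wgrad_def by (rule someI[of "H01_pair \<Omega> u" g, OF assms])
  show ae: "AE x in M. wgrad \<Omega> u x = g x" by (rule pair_uniq[OF w assms])
  show "hnorm2 \<Omega> u = integral\<^sup>L M (\<lambda>x. (norm (g x))\<^sup>2)"
    unfolding hnorm2_def using ae by (intro integral_cong_AE) (use pair_L2[OF w] pair_L2[OF assms] in \<open>auto simp: L2_def elim!: AE_mp\<close>)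
qed

end


context
  fixes \<Omega> :: "'a::euclidean_space set"
  assumes \<Omega>o: "open \<Omega>" and \<Omega>b: "bounded \<Omega>"
begin

abbreviation "MM \<equiv> lebesgue_on \<Omega>"

lemma poinc_test: "\<exists>C\<ge>0. \<forall>\<phi>. test_fun \<Omega> \<phi> \<longrightarrow>
   integral\<^sup>L MM (\<lambda>x. (\<phi> x)\<^sup>2) \<le> C * integral\<^sup>L MM (\<lambda>x. (norm (grad \<phi> x))\<^sup>2)"
proof -
  obtain b0 :: 'a where b0: "b0 \<in> Basis" using nonempty_Basis by blast
  obtain R where R: "\<And>x. x \<in> \<Omega> \<Longrightarrow> norm x \<le> R" using \<Omega>b bounded_iff by blast
  have yR: "(x \<bullet> b0)\<^sup>2 \<le> R\<^sup>2" if "x \<in> \<Omega>" for x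
  proof -
    have "\<bar>x \<bullet> b0\<bar> \<le> R" using Basis_le_norm[OF b0, of x] R[OF that] by simp
    then show ?thesis by (metis abs_ge_zero power2_abs power_mono)
  qed
  have main: "integral\<^sup>L MM (\<lambda>x. (\<phi> x)\<^sup>2) \<le> (4 * R\<^sup>2) * integral\<^sup>L MM (\<lambda>x. (norm (grad \<phi> x))\<^sup>2)"
    if \<phi>: "test_fun \<Omega> \<phi>" for \<phi>
  proof -
    define p where "p x = pd b0 \<phi> x" for x
    have pc: "continuous_on UNIV p" using test_pd_cont[OF \<phi> b0] by (simp add: p_def[abs_def])
    have p0: "p x = 0" if "x \<notin> supp \<phi>" for x using test_pd_zero[OF \<phi> b0 that] by (simp add: p_def)
    have \<phi>c: "continuous_on UNIV \<phi>" using test_cont[OF \<phi>] .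
    have \<phi>0: "\<phi> x = 0" if "x \<notin> supp \<phi>" for x using test_zero[OF \<phi> that] .
    have df: "((\<lambda>x. (x \<bullet> b0) * \<phi> x) has_derivative
        (\<lambda>h. (x \<bullet> b0) * frechet_derivative \<phi> (at x) h + (h \<bullet> b0) * \<phi> x)) (at x)" for x
    proof -
      have "((\<lambda>x. x \<bullet> b0) has_derivative (\<lambda>h. h \<bullet> b0)) (at x)"
        by (rule bounded_linear_imp_has_derivative[OF bounded_linear_inner_left])
      from has_derivative_mult[OF this test_deriv[OF \<phi>]] show ?thesis by simp
    qed
    have ibp: "integral\<^sup>L lborel (\<lambda>x. ((x \<bullet> b0) * frechet_derivative \<phi> (at x) b0 + (b0 \<bullet> b0) * \<phi> x) * \<phi> x)
        = - integral\<^sup>L lborel (\<lambda>x. ((x \<bullet> b0) * \<phi> x) * frechet_derivative \<phi> (at x) b0)"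
    proof (rule ibp_lborel(3)[OF df test_deriv[OF \<phi>], of b0 "supp \<phi>"])
      show "continuous_on UNIV (\<lambda>x. x \<bullet> b0 * frechet_derivative \<phi> (at x) b0 + b0 \<bullet> b0 * \<phi> x)"
        using pc \<phi>c unfolding p_def pd_def by (intro continuous_intros) auto
      show "continuous_on UNIV (\<lambda>x. frechet_derivative \<phi> (at x) b0)"
        using pc unfolding p_def pd_def by simp
      show "compact (supp \<phi>)" using test_props(1)[OF \<phi>] .
      show "\<And>x. x \<notin> supp \<phi> \<Longrightarrow> x \<bullet> b0 * \<phi> x = 0" using \<phi>0 by simp
    qed
    define A where "A x = (\<phi> x)\<^sup>2" for x
    define B where "B x = (x \<bullet> b0) * \<phi> x * p x" for x
    define P where "P x = (norm (grad \<phi> x))\<^sup>2" for x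
    have e1: "(\<lambda>x. ((x \<bullet> b0) * frechet_derivative \<phi> (at x) b0 + (b0 \<bullet> b0) * \<phi> x) * \<phi> x) = (\<lambda>x. B x + A x)"
      using b0 by (simp add: fun_eq_iff A_def B_def p_def pd_def algebra_simps power2_eq_square)
    have e2: "(\<lambda>x. ((x \<bullet> b0) * \<phi> x) * frechet_derivative \<phi> (at x) b0) = B"
      by (simp add: fun_eq_iff B_def p_def pd_def)
    have Ac: "continuous_on UNIV A" unfolding A_def[abs_def] using \<phi>c by (intro continuous_intros)
    have Bc: "continuous_on UNIV B" unfolding B_def[abs_def] using \<phi>c pc by (intro continuous_intros)
    have Pc: "continuous_on UNIV P" unfolding P_def[abs_def] using test_grad_cont[OF \<phi>] by (intro continuous_intros)
    have A0: "A x = 0" if "x \<notin> supp \<phi>" for x using \<phi>0[OF that] by (simp add: A_def)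
    have B0: "B x = 0" if "x \<notin> supp \<phi>" for x using \<phi>0[OF that] by (simp add: B_def)
    have P0: "P x = 0" if "x \<notin> supp \<phi>" for x using test_grad_zero[OF \<phi> that] by (simp add: P_def)
    note ccA = cc_M[OF \<Omega>o \<Omega>b \<phi> Ac A0] and ccB = cc_M[OF \<Omega>o \<Omega>b \<phi> Bc B0] and ccP = cc_M[OF \<Omega>o \<Omega>b \<phi> Pc P0]
    have "integral\<^sup>L lborel (\<lambda>x. B x + A x) = - integral\<^sup>L lborel B" using ibp by (simp only: e1 e2)
    then have eqA: "integral\<^sup>L MM A = -2 * integral\<^sup>L MM B" using ccA ccB by simp
    have pt: "-2 * B x \<le> A x / 2 + 2 * R\<^sup>2 * P x" if x: "x \<in> \<Omega>" for x
    proof -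
      have sq: "0 \<le> (\<phi> x + 2 * (x \<bullet> b0) * p x)\<^sup>2" by simp
      have "-2 * B x \<le> A x / 2 + 2 * ((x \<bullet> b0)\<^sup>2 * (p x)\<^sup>2)"
        using sq unfolding A_def B_def by (simp add: power2_eq_square algebra_simps)
      moreover have "(x \<bullet> b0)\<^sup>2 * (p x)\<^sup>2 \<le> R\<^sup>2 * P x"
        using yR[OF x] pd_le_grad[OF b0, of \<phi> x] unfolding P_def p_def
        by (intro mult_mono) auto
      ultimately show ?thesis by linarith
    qed
    have "integral\<^sup>L MM (\<lambda>x. -2 * B x) \<le> integral\<^sup>L MM (\<lambda>x. A x / 2 + 2 * R\<^sup>2 * P x)"
      using ccA ccB ccP pt by (intro integral_mono) auto
    then have "integral\<^sup>L MM A \<le> integral\<^sup>L MM A / 2 + 2 * R\<^sup>2 * integral\<^sup>L MM P"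
      using ccA ccB ccP eqA by simp
    then have "integral\<^sup>L MM A \<le> 4 * R\<^sup>2 * integral\<^sup>L MM P" by simp
    then show ?thesis by (simp add: A_def[abs_def] P_def[abs_def])
  qed
  show ?thesis using main by (intro exI[of _ "4 * R\<^sup>2"]) auto
qed

lemma poinc: "\<exists>C\<ge>0. \<forall>u g. H01_pair \<Omega> u g \<longrightarrow>
   integral\<^sup>L MM (\<lambda>x. (u x)\<^sup>2) \<le> C * integral\<^sup>L MM (\<lambda>x. (norm (g x))\<^sup>2)"
proof -
  obtain C where C: "C \<ge> 0" "\<And>\<phi>. test_fun \<Omega> \<phi> \<Longrightarrow>
     integral\<^sup>L MM (\<lambda>x. (\<phi> x)\<^sup>2) \<le> C * integral\<^sup>L MM (\<lambda>x. (norm (grad \<phi> x))\<^sup>2)"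
    using poinc_test by blast
  have "integral\<^sup>L MM (\<lambda>x. (u x)\<^sup>2) \<le> C * integral\<^sup>L MM (\<lambda>x. (norm (g x))\<^sup>2)"
    if ug: "H01_pair \<Omega> u g" for u g
  proof -
    obtain \<phi> where \<phi>: "\<And>n. test_fun \<Omega> (\<phi> n)" "u \<in> borel_measurable MM" "g \<in> borel_measurable MM"
      "\<And>n. integrable MM (\<lambda>x. (norm (\<phi> n x - u x))\<^sup>2)"
      "\<And>n. integrable MM (\<lambda>x. (norm (grad (\<phi> n) x - g x))\<^sup>2)"
      "(\<lambda>n. integral\<^sup>L MM (\<lambda>x. (norm (\<phi> n x - u x))\<^sup>2)) \<longlonglongrightarrow> 0"
      "(\<lambda>n. integral\<^sup>L MM (\<lambda>x. (norm (grad (\<phi> n) x - g x))\<^sup>2)) \<longlonglongrightarrow> 0"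
      by (rule pairE[OF \<Omega>o \<Omega>b ug], rule that, assumption+)
    have l1: "(\<lambda>n. integral\<^sup>L MM (\<lambda>x. (norm (\<phi> n x))\<^sup>2)) \<longlonglongrightarrow> integral\<^sup>L MM (\<lambda>x. (norm (u x))\<^sup>2)"
      by (rule conv_norm[OF test_L2[OF \<Omega>o \<Omega>b \<phi>(1)] pair_L2(1)[OF \<Omega>o \<Omega>b ug] \<phi>(6)])
    have l2: "(\<lambda>n. integral\<^sup>L MM (\<lambda>x. (norm (grad (\<phi> n) x))\<^sup>2)) \<longlonglongrightarrow> integral\<^sup>L MM (\<lambda>x. (norm (g x))\<^sup>2)"
      by (rule conv_norm[OF test_grad_L2[OF \<Omega>o \<Omega>b \<phi>(1)] pair_L2(2)[OF \<Omega>o \<Omega>b ug] \<phi>(7)])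
    have "integral\<^sup>L MM (\<lambda>x. (norm (u x))\<^sup>2) \<le> C * integral\<^sup>L MM (\<lambda>x. (norm (g x))\<^sup>2)"
    proof (rule tendsto_le[OF _ tendsto_mult_left[OF l2] l1])
      show "\<forall>\<^sub>F n in sequentially. integral\<^sup>L MM (\<lambda>x. (norm (\<phi> n x))\<^sup>2) \<le> C * integral\<^sup>L MM (\<lambda>x. (norm (grad (\<phi> n) x))\<^sup>2)"
        using C(2)[OF \<phi>(1)] by simp
    qed simp
    then show ?thesis by simp
  qed
  then show ?thesis using C(1) by blast
qed

lemma pair_lincomb:
  assumes ug: "H01_pair \<Omega> u g" and vh: "H01_pair \<Omega> v h"
  shows "H01_pair \<Omega> (\<lambda>x. a * u x + c * v x) (\<lambda>x. a *\<^sub>R g x + c *\<^sub>R h x)"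
proof -
  obtain \<phi> where \<phi>: "\<And>n. test_fun \<Omega> (\<phi> n)" "u \<in> borel_measurable MM" "g \<in> borel_measurable MM"
    "\<And>n. integrable MM (\<lambda>x. (norm (\<phi> n x - u x))\<^sup>2)"
    "\<And>n. integrable MM (\<lambda>x. (norm (grad (\<phi> n) x - g x))\<^sup>2)"
    "(\<lambda>n. integral\<^sup>L MM (\<lambda>x. (norm (\<phi> n x - u x))\<^sup>2)) \<longlonglongrightarrow> 0"
    "(\<lambda>n. integral\<^sup>L MM (\<lambda>x. (norm (grad (\<phi> n) x - g x))\<^sup>2)) \<longlonglongrightarrow> 0"
    by (rule pairE[OF \<Omega>o \<Omega>b ug], rule that, assumption+)
  obtain \<psi> where \<psi>: "\<And>n. test_fun \<Omega> (\<psi> n)" "v \<in> borel_measurable MM" "h \<in> borel_measurable MM"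
    "\<And>n. integrable MM (\<lambda>x. (norm (\<psi> n x - v x))\<^sup>2)"
    "\<And>n. integrable MM (\<lambda>x. (norm (grad (\<psi> n) x - h x))\<^sup>2)"
    "(\<lambda>n. integral\<^sup>L MM (\<lambda>x. (norm (\<psi> n x - v x))\<^sup>2)) \<longlonglongrightarrow> 0"
    "(\<lambda>n. integral\<^sup>L MM (\<lambda>x. (norm (grad (\<psi> n) x - h x))\<^sup>2)) \<longlonglongrightarrow> 0"
    by (rule pairE[OF \<Omega>o \<Omega>b vh], rule that, assumption+)
  define \<Phi> where "\<Phi> n x = a * \<phi> n x + c * \<psi> n x" for n x
  have t\<Phi>: "test_fun \<Omega> (\<Phi> n)" for n unfolding \<Phi>_def[abs_def] using \<phi>(1) \<psi>(1) by (rule test_lincomb)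
  have gr: "grad (\<Phi> n) x = a *\<^sub>R grad (\<phi> n) x + c *\<^sub>R grad (\<psi> n) x" for n x
    unfolding \<Phi>_def[abs_def] using test_props(3)[OF \<phi>(1)] test_props(3)[OF \<psi>(1)] by (rule grad_lincomb)
  have LX: "L2 MM (\<lambda>x. \<phi> n x - u x)" for n
    using L2_diff[OF test_L2[OF \<Omega>o \<Omega>b \<phi>(1)] pair_L2(1)[OF \<Omega>o \<Omega>b ug]] .
  have LY: "L2 MM (\<lambda>x. \<psi> n x - v x)" for n
    using L2_diff[OF test_L2[OF \<Omega>o \<Omega>b \<psi>(1)] pair_L2(1)[OF \<Omega>o \<Omega>b vh]] .
  have LG: "L2 MM (\<lambda>x. grad (\<phi> n) x - g x)" for n
    using L2_diff[OF test_grad_L2[OF \<Omega>o \<Omega>b \<phi>(1)] pair_L2(2)[OF \<Omega>o \<Omega>b ug]] .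
  have LH: "L2 MM (\<lambda>x. grad (\<psi> n) x - h x)" for n
    using L2_diff[OF test_grad_L2[OF \<Omega>o \<Omega>b \<psi>(1)] pair_L2(2)[OF \<Omega>o \<Omega>b vh]] .
  have ex1: "\<Phi> n x - (a * u x + c * v x) = a *\<^sub>R (\<phi> n x - u x) + c *\<^sub>R (\<psi> n x - v x)" for n x
    by (simp add: \<Phi>_def algebra_simps)
  have ex2: "grad (\<Phi> n) x - (a *\<^sub>R g x + c *\<^sub>R h x) = a *\<^sub>R (grad (\<phi> n) x - g x) + c *\<^sub>R (grad (\<psi> n) x - h x)" for n x
    by (simp add: gr algebra_simps)
  have i1: "integrable MM (\<lambda>x. (\<Phi> n x - (a * u x + c * v x))\<^sup>2)" for n
    using L2_lincomb[OF LX[of n] LY[of n], of a c] unfolding L2_def by (simp add: ex1)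
  have i2: "integrable MM (\<lambda>x. (norm (grad (\<Phi> n) x - (a *\<^sub>R g x + c *\<^sub>R h x)))\<^sup>2)" for n
    using L2_lincomb[OF LG[of n] LH[of n], of a c] unfolding L2_def by (simp only: ex2)
  have c1: "(\<lambda>n. integral\<^sup>L MM (\<lambda>x. (\<Phi> n x - (a * u x + c * v x))\<^sup>2)) \<longlonglongrightarrow> 0"
    using conv_lincomb0[where M=MM and X="\<lambda>n x. \<phi> n x - u x" and Y="\<lambda>n x. \<psi> n x - v x" and a=a and c=c, OF LX LY \<phi>(6) \<psi>(6)]
    by (simp add: ex1)
  have c2: "(\<lambda>n. integral\<^sup>L MM (\<lambda>x. (norm (grad (\<Phi> n) x - (a *\<^sub>R g x + c *\<^sub>R h x)))\<^sup>2)) \<longlonglongrightarrow> 0"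
    using conv_lincomb0[where M=MM and X="\<lambda>n x. grad (\<phi> n) x - g x" and Y="\<lambda>n x. grad (\<psi> n) x - h x" and a=a and c=c, OF LG LH \<phi>(7) \<psi>(7)]
    by (simp only: ex2)
  have m1: "(\<lambda>x. a * u x + c * v x) \<in> borel_measurable MM" using \<phi>(2) \<psi>(2) by measurable
  have m2: "(\<lambda>x. a *\<^sub>R g x + c *\<^sub>R h x) \<in> borel_measurable MM" using \<phi>(3) \<psi>(3)
    by (intro borel_measurable_add borel_measurable_scaleR) auto
  show ?thesis unfolding H01_pair_def using t\<Phi> i1 i2 c1 c2 m1 m2 by blast
qed

end


context
  fixes \<Omega> :: "'a::euclidean_space set"
  assumes \<Omega>o: "open \<Omega>" and \<Omega>b: "bounded \<Omega>"
begin

abbreviation "M3 \<equiv> lebesgue_on \<Omega>"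

definition Bf :: "('a \<Rightarrow> real) \<Rightarrow> ('a \<Rightarrow> real) \<Rightarrow> real" where
  "Bf u v = integral\<^sup>L M3 (\<lambda>x. wgrad \<Omega> u x \<bullet> wgrad \<Omega> v x)"

lemma H01_pairI: "u \<in> H01 \<Omega> \<Longrightarrow> H01_pair \<Omega> u (wgrad \<Omega> u)"
  unfolding H01_def using hnorm_pair(3)[OF \<Omega>o \<Omega>b] by blast

lemma H01_L2: "u \<in> H01 \<Omega> \<Longrightarrow> L2 M3 u" "u \<in> H01 \<Omega> \<Longrightarrow> L2 M3 (wgrad \<Omega> u)"
  using pair_L2[OF \<Omega>o \<Omega>b H01_pairI] by auto

lemma hnorm_def2: "u \<in> H01 \<Omega> \<Longrightarrow> hnorm2 \<Omega> u = integral\<^sup>L M3 (\<lambda>x. (norm (wgrad \<Omega> u x))\<^sup>2)"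
  by (simp add: hnorm2_def)

lemma hnorm_nonneg: "hnorm2 \<Omega> u \<ge> 0"
  unfolding hnorm2_def by (rule integral_nonneg_AE) auto

lemma H01_lincomb:
  assumes "u \<in> H01 \<Omega>" "v \<in> H01 \<Omega>"
  shows "(\<lambda>x. a * u x + c * v x) \<in> H01 \<Omega>"
    "hnorm2 \<Omega> (\<lambda>x. a * u x + c * v x) = a\<^sup>2 * hnorm2 \<Omega> u + 2 * a * c * Bf u v + c\<^sup>2 * hnorm2 \<Omega> v"
proof -
  have p: "H01_pair \<Omega> (\<lambda>x. a * u x + c * v x) (\<lambda>x. a *\<^sub>R wgrad \<Omega> u x + c *\<^sub>R wgrad \<Omega> v x)"
    by (rule pair_lincomb[OF \<Omega>o \<Omega>b H01_pairI[OF assms(1)] H01_pairI[OF assms(2)]])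
  then show "(\<lambda>x. a * u x + c * v x) \<in> H01 \<Omega>" unfolding H01_def by blast
  show "hnorm2 \<Omega> (\<lambda>x. a * u x + c * v x) = a\<^sup>2 * hnorm2 \<Omega> u + 2 * a * c * Bf u v + c\<^sup>2 * hnorm2 \<Omega> v"
    using hnorm_pair(1)[OF \<Omega>o \<Omega>b p] L2_int_lincomb[OF H01_L2(2)[OF assms(1)] H01_L2(2)[OF assms(2)]]
    by (simp add: hnorm2_def Bf_def)
qed

lemma Bf_CS:
  assumes "u \<in> H01 \<Omega>" "v \<in> H01 \<Omega>"
  shows "\<bar>Bf u v\<bar> \<le> sqrt (hnorm2 \<Omega> u) * sqrt (hnorm2 \<Omega> v)"
  unfolding Bf_def hnorm2_def by (rule L2_CS_abs[OF H01_L2(2)[OF assms(1)] H01_L2(2)[OF assms(2)]])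

lemma poincH: "\<exists>C\<ge>0. \<forall>u\<in>H01 \<Omega>. integral\<^sup>L M3 (\<lambda>x. (u x)\<^sup>2) \<le> C * hnorm2 \<Omega> u"
proof -
  obtain C where C: "C \<ge> 0" "\<And>u g. H01_pair \<Omega> u g \<Longrightarrow>
     integral\<^sup>L M3 (\<lambda>x. (u x)\<^sup>2) \<le> C * integral\<^sup>L M3 (\<lambda>x. (norm (g x))\<^sup>2)"
    using poinc[OF \<Omega>o \<Omega>b] by blast
  show ?thesis using C H01_pairI by (intro exI[of _ C]) (auto simp: hnorm2_def)
qed

lemma hpos:
  assumes "u \<in> H01 \<Omega>" "\<not> (AE x in M3. u x = 0)"
  shows "hnorm2 \<Omega> u > 0"
proof (rule ccontr)
  assume "\<not> hnorm2 \<Omega> u > 0"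
  then have h0: "hnorm2 \<Omega> u = 0" using hnorm_nonneg[of u] by simp
  obtain C where C: "C \<ge> 0" "\<And>u. u \<in> H01 \<Omega> \<Longrightarrow> integral\<^sup>L M3 (\<lambda>x. (u x)\<^sup>2) \<le> C * hnorm2 \<Omega> u"
    using poincH by blast
  have i: "integrable M3 (\<lambda>x. (u x)\<^sup>2)" using H01_L2(1)[OF assms(1)] by (simp add: L2_def)
  have "integral\<^sup>L M3 (\<lambda>x. (u x)\<^sup>2) \<le> 0" using C(2)[OF assms(1)] h0 by simp
  moreover have "integral\<^sup>L M3 (\<lambda>x. (u x)\<^sup>2) \<ge> 0" by (rule integral_nonneg_AE) auto
  ultimately have "integral\<^sup>L M3 (\<lambda>x. (u x)\<^sup>2) = 0" by simp
  then have "AE x in M3. (u x)\<^sup>2 = 0" using i by (subst (asm) integral_nonneg_eq_0_iff_AE) auto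
  then have "AE x in M3. u x = 0" by eventually_elim simp
  then show False using assms(2) by simp
qed

end


context
  fixes \<Omega> :: "'a::euclidean_space set" and \<eta> :: "'a \<Rightarrow> real" and E :: real
  assumes \<Omega>o: "open \<Omega>" and \<Omega>b: "bounded \<Omega>"
    and \<eta>m: "\<eta> \<in> borel_measurable (lebesgue_on \<Omega>)"
    and \<eta>E: "AE x in lebesgue_on \<Omega>. \<bar>\<eta> x\<bar> \<le> E" and E0: "E \<ge> 0"
begin

abbreviation "M4 \<equiv> lebesgue_on \<Omega>"

definition Jf :: "('a \<Rightarrow> real) \<Rightarrow> ('a \<Rightarrow> real) \<Rightarrow> real" where
  "Jf u v = integral\<^sup>L M4 (\<lambda>x. \<eta> x * u x * v x)"

lemma L2_eta:
  assumes "L2 M4 u"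
  shows "L2 M4 (\<lambda>x. \<eta> x * u x)"
    "integral\<^sup>L M4 (\<lambda>x. (norm (\<eta> x * u x))\<^sup>2) \<le> E\<^sup>2 * integral\<^sup>L M4 (\<lambda>x. (norm (u x))\<^sup>2)"
proof -
  have um: "u \<in> borel_measurable M4" and ui: "integrable M4 (\<lambda>x. (norm (u x))\<^sup>2)"
    using assms by (auto simp: L2_def)
  have m: "(\<lambda>x. \<eta> x * u x) \<in> borel_measurable M4" using \<eta>m um by (rule borel_measurable_times)
  have bnd: "AE x in M4. (norm (\<eta> x * u x))\<^sup>2 \<le> E\<^sup>2 * (norm (u x))\<^sup>2"
    using \<eta>E
  proof eventually_elim
    fix x assume "\<bar>\<eta> x\<bar> \<le> E"
    then have "(\<eta> x)\<^sup>2 \<le> E\<^sup>2" by (metis abs_ge_zero power2_abs power_mono)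
    then show "(norm (\<eta> x * u x))\<^sup>2 \<le> E\<^sup>2 * (norm (u x))\<^sup>2"
      by (simp add: power_mult_distrib mult_right_mono)
  qed
  have i: "integrable M4 (\<lambda>x. (norm (\<eta> x * u x))\<^sup>2)"
  proof (rule Bochner_Integration.integrable_bound[OF integrable_mult_right[OF ui, of "E\<^sup>2"]])
    show "(\<lambda>x. (norm (\<eta> x * u x))\<^sup>2) \<in> borel_measurable M4" using m by measurable
    show "AE x in M4. norm ((norm (\<eta> x * u x))\<^sup>2) \<le> norm (E\<^sup>2 * (norm (u x))\<^sup>2)"
      using bnd by eventually_elim simp
  qed
  show "L2 M4 (\<lambda>x. \<eta> x * u x)" unfolding L2_def using m i by simp
  show "integral\<^sup>L M4 (\<lambda>x. (norm (\<eta> x * u x))\<^sup>2) \<le> E\<^sup>2 * integral\<^sup>L M4 (\<lambda>x. (norm (u x))\<^sup>2)"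
    using integral_mono_AE[OF i integrable_mult_right[OF ui, of "E\<^sup>2"] bnd] by simp
qed

lemma J_int:
  assumes "L2 M4 u" "L2 M4 v"
  shows "integrable M4 (\<lambda>x. \<eta> x * u x * v x)"
  using L2_inner[OF L2_eta(1)[OF assms(1)] assms(2)] by simp

lemma J_CS:
  assumes "L2 M4 u" "L2 M4 v"
  shows "\<bar>Jf u v\<bar> \<le> E * sqrt (integral\<^sup>L M4 (\<lambda>x. (u x)\<^sup>2)) * sqrt (integral\<^sup>L M4 (\<lambda>x. (v x)\<^sup>2))"
proof -
  have "\<bar>Jf u v\<bar> \<le> sqrt (integral\<^sup>L M4 (\<lambda>x. (norm (\<eta> x * u x))\<^sup>2)) * sqrt (integral\<^sup>L M4 (\<lambda>x. (norm (v x))\<^sup>2))"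
    using L2_CS_abs[OF L2_eta(1)[OF assms(1)] assms(2)] by (simp add: Jf_def)
  also have "\<dots> \<le> sqrt (E\<^sup>2 * integral\<^sup>L M4 (\<lambda>x. (norm (u x))\<^sup>2)) * sqrt (integral\<^sup>L M4 (\<lambda>x. (norm (v x))\<^sup>2))"
    using L2_eta(2)[OF assms(1)] by (intro mult_right_mono real_sqrt_le_mono) auto
  also have "\<dots> = E * sqrt (integral\<^sup>L M4 (\<lambda>x. (u x)\<^sup>2)) * sqrt (integral\<^sup>L M4 (\<lambda>x. (v x)\<^sup>2))"
    using E0 by (simp add: real_sqrt_mult)
  finally show ?thesis .
qed

lemma J_lincomb:
  assumes "L2 M4 u" "L2 M4 v"
  shows "integral\<^sup>L M4 (\<lambda>x. \<eta> x * (a * u x + c * v x)\<^sup>2)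
     = a\<^sup>2 * integral\<^sup>L M4 (\<lambda>x. \<eta> x * (u x)\<^sup>2) + 2 * a * c * Jf u v + c\<^sup>2 * integral\<^sup>L M4 (\<lambda>x. \<eta> x * (v x)\<^sup>2)"
proof -
  have iu: "integrable M4 (\<lambda>x. \<eta> x * (u x)\<^sup>2)" using J_int[OF assms(1) assms(1)] by (simp add: power2_eq_square mult.assoc)
  have iv: "integrable M4 (\<lambda>x. \<eta> x * (v x)\<^sup>2)" using J_int[OF assms(2) assms(2)] by (simp add: power2_eq_square mult.assoc)
  have iuv: "integrable M4 (\<lambda>x. \<eta> x * u x * v x)" using J_int[OF assms] .
  have "(\<lambda>x. \<eta> x * (a * u x + c * v x)\<^sup>2)
      = (\<lambda>x. a\<^sup>2 * (\<eta> x * (u x)\<^sup>2) + 2 * a * c * (\<eta> x * u x * v x) + c\<^sup>2 * (\<eta> x * (v x)\<^sup>2))"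
    by (simp add: fun_eq_iff power2_eq_square algebra_simps)
  then show ?thesis using iu iv iuv by (simp add: Jf_def)
qed

definition Qf :: "('a \<Rightarrow> real) \<Rightarrow> real" where
  "Qf u = hnorm2 \<Omega> u - integral\<^sup>L M4 (\<lambda>x. \<eta> x * (u x)\<^sup>2)"

lemma Q_lincomb:
  assumes "u \<in> H01 \<Omega>" "v \<in> H01 \<Omega>"
  shows "Qf (\<lambda>x. a * u x + c * v x) = a\<^sup>2 * Qf u + 2 * a * c * (Bf \<Omega> u v - Jf u v) + c\<^sup>2 * Qf v"
  using H01_lincomb(2)[OF \<Omega>o \<Omega>b assms] J_lincomb[OF H01_L2(1)[OF \<Omega>o \<Omega>b assms(1)] H01_L2(1)[OF \<Omega>o \<Omega>b assms(2)]]
  by (simp add: Qf_def algebra_simps)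

end


context
  fixes \<Omega> :: "'a::euclidean_space set" and \<eta> :: "'a \<Rightarrow> real" and E :: real
  assumes \<Omega>o: "open \<Omega>" and \<Omega>b: "bounded \<Omega>"
    and \<eta>m: "\<eta> \<in> borel_measurable (lebesgue_on \<Omega>)"
    and \<eta>E: "AE x in lebesgue_on \<Omega>. \<bar>\<eta> x\<bar> \<le> E" and E0: "E \<ge> 0"
begin

lemma Q_cont:
  assumes u: "u \<in> H01 \<Omega>" and eps: "\<epsilon> > 0"
  shows "\<exists>\<delta>>0. \<forall>v\<in>H01 \<Omega>. hnorm2 \<Omega> (\<lambda>x. v x - u x) < \<delta> \<longrightarrow> \<bar>Qf \<Omega> \<eta> v - Qf \<Omega> \<eta> u\<bar> < \<epsilon>"
proof -
  note Jd = Jf_def[OF \<Omega>o \<Omega>b \<eta>m \<eta>E E0] and Qd = Qf_def[OF \<Omega>o \<Omega>b \<eta>m \<eta>E E0]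
  obtain C where C: "C \<ge> 0" "\<And>u. u \<in> H01 \<Omega> \<Longrightarrow> integral\<^sup>L (lebesgue_on \<Omega>) (\<lambda>x. (u x)\<^sup>2) \<le> C * hnorm2 \<Omega> u"
    using poincH[OF \<Omega>o \<Omega>b] by blast
  define hu where "hu = hnorm2 \<Omega> u"
  define Iu where "Iu = integral\<^sup>L (lebesgue_on \<Omega>) (\<lambda>x. (u x)\<^sup>2)"
  have hu0: "hu \<ge> 0" unfolding hu_def by (rule hnorm_nonneg[OF \<Omega>o \<Omega>b])
  have Iu0: "Iu \<ge> 0" unfolding Iu_def by (rule integral_nonneg_AE) auto
  define K1 where "K1 = 2 * sqrt hu + 2 * E * sqrt Iu * sqrt C"
  define K2 where "K2 = 1 + E * C"
  have K1: "K1 \<ge> 0" unfolding K1_def using hu0 Iu0 E0 C(1) by simp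
  have K2: "K2 \<ge> 0" unfolding K2_def using E0 C(1) by simp
  define \<delta> where "\<delta> = min 1 ((\<epsilon> / (K1 + K2 + 1))\<^sup>2)"
  have \<delta>: "\<delta> > 0" unfolding \<delta>_def using eps K1 K2 by simp
  have "\<bar>Qf \<Omega> \<eta> v - Qf \<Omega> \<eta> u\<bar> < \<epsilon>" if v: "v \<in> H01 \<Omega>" and vd: "hnorm2 \<Omega> (\<lambda>x. v x - u x) < \<delta>" for v
  proof -
    define w where "w = (\<lambda>x. v x - u x)"
    have w_eq: "w = (\<lambda>x. 1 * v x + (-1) * u x)" by (simp add: w_def fun_eq_iff)
    have w: "w \<in> H01 \<Omega>" unfolding w_eq by (rule H01_lincomb(1)[OF \<Omega>o \<Omega>b v u])
    have v_eq: "v = (\<lambda>x. 1 * u x + 1 * w x)" by (simp add: w_def fun_eq_iff)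
    define s where "s = hnorm2 \<Omega> w"
    define r where "r = sqrt s"
    have s0: "s \<ge> 0" unfolding s_def by (rule hnorm_nonneg[OF \<Omega>o \<Omega>b])
    have sr: "s = r\<^sup>2" unfolding r_def using s0 by simp
    have r0: "r \<ge> 0" unfolding r_def using s0 by simp
    have sd: "s < \<delta>" using vd by (simp add: s_def w_def)
    have s1: "s < 1" using sd \<delta>_def by simp
    have r1: "r < 1" unfolding r_def using s1 s0 by simp
    have rr: "r\<^sup>2 \<le> r" using r0 r1 by (simp add: power2_eq_square mult_left_le)
    have "s < (\<epsilon> / (K1 + K2 + 1))\<^sup>2" using sd \<delta>_def by simp
    then have "r < \<epsilon> / (K1 + K2 + 1)" unfolding r_def using eps K1 K2
      by (metis abs_of_pos divide_pos_pos real_sqrt_abs real_sqrt_less_mono add_nonneg_nonneg zero_less_one add_nonneg_pos)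
    then have rK: "(K1 + K2 + 1) * r < \<epsilon>" using K1 K2 by (simp add: field_simps)
    have Lu: "L2 (lebesgue_on \<Omega>) u" and Lw: "L2 (lebesgue_on \<Omega>) w" using H01_L2(1)[OF \<Omega>o \<Omega>b] u w by auto
    define Iw where "Iw = integral\<^sup>L (lebesgue_on \<Omega>) (\<lambda>x. (w x)\<^sup>2)"
    have Iw0: "Iw \<ge> 0" unfolding Iw_def by (rule integral_nonneg_AE) auto
    have Iw: "Iw \<le> C * s" unfolding Iw_def s_def using C(2)[OF w] .
    have Qv: "Qf \<Omega> \<eta> v = Qf \<Omega> \<eta> u + 2 * (Bf \<Omega> u w - Jf \<Omega> \<eta> u w) + Qf \<Omega> \<eta> w"
      using Q_lincomb[OF \<Omega>o \<Omega>b \<eta>m \<eta>E E0 u w, of 1 1] v_eq by simp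
    have B: "\<bar>Bf \<Omega> u w\<bar> \<le> sqrt hu * r" using Bf_CS[OF \<Omega>o \<Omega>b u w] by (simp add: hu_def r_def s_def)
    have J: "\<bar>Jf \<Omega> \<eta> u w\<bar> \<le> E * sqrt Iu * sqrt C * r"
    proof -
      have "\<bar>Jf \<Omega> \<eta> u w\<bar> \<le> E * sqrt Iu * sqrt Iw"
        using J_CS[OF \<Omega>o \<Omega>b \<eta>m \<eta>E E0 Lu Lw] by (simp add: Iu_def Iw_def)
      also have "\<dots> \<le> E * sqrt Iu * sqrt (C * s)"
        using Iw E0 Iu0 by (intro mult_left_mono real_sqrt_le_mono) auto
      finally show ?thesis by (simp add: real_sqrt_mult r_def mult.assoc)
    qed
    have Jw: "\<bar>integral\<^sup>L (lebesgue_on \<Omega>) (\<lambda>x. \<eta> x * (w x)\<^sup>2)\<bar> \<le> E * C * s"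
    proof -
      have "integral\<^sup>L (lebesgue_on \<Omega>) (\<lambda>x. \<eta> x * (w x)\<^sup>2) = Jf \<Omega> \<eta> w w"
        unfolding Jd by (simp add: power2_eq_square mult.assoc)
      moreover have "\<bar>Jf \<Omega> \<eta> w w\<bar> \<le> E * sqrt Iw * sqrt Iw"
        using J_CS[OF \<Omega>o \<Omega>b \<eta>m \<eta>E E0 Lw Lw] by (simp add: Iw_def)
      moreover have "sqrt Iw * sqrt Iw = Iw" using Iw0 by simp
      ultimately have "\<bar>integral\<^sup>L (lebesgue_on \<Omega>) (\<lambda>x. \<eta> x * (w x)\<^sup>2)\<bar> \<le> E * Iw" by (simp add: mult.assoc)
      also have "\<dots> \<le> E * (C * s)" using Iw E0 by (rule mult_left_mono)
      finally show ?thesis by (simp add: mult.assoc)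
    qed
    have Qw: "\<bar>Qf \<Omega> \<eta> w\<bar> \<le> K2 * r\<^sup>2"
      using Jw s0 unfolding Qd K2_def s_def[symmetric] sr[symmetric] by (simp add: algebra_simps abs_le_iff) 
    have "\<bar>Qf \<Omega> \<eta> v - Qf \<Omega> \<eta> u\<bar> \<le> 2 * \<bar>Bf \<Omega> u w\<bar> + 2 * \<bar>Jf \<Omega> \<eta> u w\<bar> + \<bar>Qf \<Omega> \<eta> w\<bar>"
      using Qv by (simp add: abs_le_iff) linarith
    also have "\<dots> \<le> 2 * (sqrt hu * r) + 2 * (E * sqrt Iu * sqrt C * r) + K2 * r\<^sup>2"
      using B J Qw by linarith
    also have "\<dots> = K1 * r + K2 * r\<^sup>2" by (simp add: K1_def algebra_simps)
    also have "\<dots> \<le> K1 * r + K2 * r" using rr K2 by (simp add: mult_left_mono)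
    also have "\<dots> \<le> (K1 + K2 + 1) * r" using r0 by (simp add: algebra_simps)
    finally show ?thesis using rK by linarith
  qed
  then show ?thesis using \<delta> by blast
qed

end


lemma ratio_bound:
  fixes g :: "real \<Rightarrow> real"
  assumes inc: "\<forall>s t. 0 < s \<and> s < t \<longrightarrow> g s / s < g t / t"
    and dec: "\<forall>s t. s < t \<and> t < 0 \<longrightarrow> g s / s > g t / t"
    and lim: "((\<lambda>t. g t / t) \<longlongrightarrow> L) at_infinity" and t: "t \<noteq> 0"
  shows "g t * t < L * t\<^sup>2"
proof -
  have rt: "g t / t < L"
  proof (cases "t > 0")
    case True
    have l: "((\<lambda>t. g t / t) \<longlongrightarrow> L) at_top" using lim by (rule filterlim_mono[OF _ order_refl at_top_le_at_infinity])
    have "g (2 * t) / (2 * t) \<le> L"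
    proof (rule tendsto_lowerbound[OF l])
      show "\<forall>\<^sub>F s in at_top. g (2 * t) / (2 * t) \<le> g s / s"
        unfolding eventually_at_top_linorder using True inc
        by (intro exI[of _ "2 * t + 1"]) (auto intro!: less_imp_le)
    qed simp
    moreover have "g t / t < g (2 * t) / (2 * t)" using inc True by auto
    ultimately show ?thesis by linarith
  next
    case False
    then have tn: "t < 0" using t by simp
    have l: "((\<lambda>t. g t / t) \<longlongrightarrow> L) at_bot" using lim by (rule filterlim_mono[OF _ order_refl at_bot_le_at_infinity])
    have "g (2 * t) / (2 * t) \<le> L"
    proof (rule tendsto_lowerbound[OF l])
      show "\<forall>\<^sub>F s in at_bot. g (2 * t) / (2 * t) \<le> g s / s"
        unfolding eventually_at_bot_linorder using tn dec
        by (intro exI[of _ "2 * t - 1"]) (auto intro!: less_imp_le)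
    qed simp
    moreover have "g t / t < g (2 * t) / (2 * t)" using dec tn by auto
    ultimately show ?thesis by linarith
  qed
  have "g t * t = (g t / t) * t\<^sup>2" using t by (simp add: power2_eq_square)
  also have "\<dots> < L * t\<^sup>2" using rt t by (intro mult_strict_right_mono) auto
  finally show ?thesis .
qed

lemma eig_lt:
  assumes "eig_aux \<Omega> \<theta> k < 1"
  shows "\<exists>l. l \<in> pos_eigs \<Omega> \<theta> \<and> l < 1"
proof (cases k)
  case 0
  then have "Inf (ereal ` pos_eigs \<Omega> \<theta>) < 1" using assms by simp
  then show ?thesis by (auto simp: Inf_less_iff)
next
  case (Suc j)
  then have "Inf (ereal ` {l \<in> pos_eigs \<Omega> \<theta>. ereal l > eig_aux \<Omega> \<theta> j}) < 1" using assms by simp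
  then show ?thesis by (auto simp: Inf_less_iff)
qed


theorem lemma2p1:
  fixes \<Omega> :: "'a::euclidean_space set"
    and f :: "'a \<Rightarrow> real \<Rightarrow> real"
    and \<alpha> \<eta> :: "'a \<Rightarrow> real"
  assumes dom: "smooth_bounded_domain \<Omega>"
    and carath: "caratheodory \<Omega> f"
    and f1: "AE x in lebesgue_on \<Omega>.
              (\<forall>s t. 0 < s \<and> s < t \<longrightarrow> f x s / s < f x t / t) \<and>
              (\<forall>s t. s < t \<and> t < 0 \<longrightarrow> f x s / s > f x t / t) \<and>
              ((\<lambda>t. f x t / t) \<longlongrightarrow> \<alpha> x) (at 0) \<and> \<alpha> x \<ge> 0 \<and>
              ((\<lambda>t. f x t / t) \<longlongrightarrow> \<eta> x) at_infinity"
    and alpha_Linf: "Linf \<Omega> \<alpha>"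
    and eta_Linf: "Linf \<Omega> \<eta>"
    and f2: "\<exists>m\<ge>1. lambda_eig \<Omega> \<eta> m < 1 \<and> 1 < lambda_eig \<Omega> \<alpha> 1"
  shows "H_open \<Omega> (setA \<Omega> \<eta>) \<and> setA \<Omega> \<eta> \<noteq> {} \<and>
         H_boundary \<Omega> (setA \<Omega> \<eta>) =
           {u \<in> H01 \<Omega>. hnorm2 \<Omega> u = integral\<^sup>L (lebesgue_on \<Omega>) (\<lambda>x. \<eta> x * (u x)^2)} \<and>
         H01 \<Omega> - setA \<Omega> \<eta> =
           {u \<in> H01 \<Omega>. hnorm2 \<Omega> u \<ge> integral\<^sup>L (lebesgue_on \<Omega>) (\<lambda>x. \<eta> x * (u x)^2)} \<and>
         nehari \<Omega> f \<subseteq> setA \<Omega> \<eta> \<and>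
         unit_sphere \<Omega> \<inter> setA \<Omega> \<eta> \<noteq> {}"
proof -
  have \<Omega>o: "open \<Omega>" and \<Omega>b: "bounded \<Omega>" using dom by (auto simp: smooth_bounded_domain_def)
  obtain E1 where \<eta>m: "\<eta> \<in> borel_measurable (lebesgue_on \<Omega>)" and E1: "AE x in lebesgue_on \<Omega>. \<bar>\<eta> x\<bar> \<le> E1"
    using eta_Linf by (auto simp: Linf_def)
  define E where "E = max E1 0"
  have E0: "E \<ge> 0" by (simp add: E_def)
  have \<eta>E: "AE x in lebesgue_on \<Omega>. \<bar>\<eta> x\<bar> \<le> E" using E1 by eventually_elim (simp add: E_def)
  note Qd = Qf_def[OF \<Omega>o \<Omega>b \<eta>m \<eta>E E0]
  note Ql = Q_lincomb[OF \<Omega>o \<Omega>b \<eta>m \<eta>E E0]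
  note Qc = Q_cont[OF \<Omega>o \<Omega>b \<eta>m \<eta>E E0]
  note Hl = H01_lincomb[OF \<Omega>o \<Omega>b]
  let ?Q = "Qf \<Omega> \<eta>"
  let ?A = "setA \<Omega> \<eta>"
  let ?J = "\<lambda>u. integral\<^sup>L (lebesgue_on \<Omega>) (\<lambda>x. \<eta> x * (u x)^2)"
  have A_iff: "u \<in> ?A \<longleftrightarrow> u \<in> H01 \<Omega> \<and> ?Q u < 0" for u
    by (simp add: setA_def Qd)
  have Q_iff: "?Q u = hnorm2 \<Omega> u - ?J u" for u by (simp add: Qd)
  have openA: "\<exists>e>0. \<forall>v\<in>H01 \<Omega>. hnorm2 \<Omega> (\<lambda>x. v x - u x) < e \<longrightarrow> v \<in> ?A" if u: "u \<in> ?A" for u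
  proof -
    have uH: "u \<in> H01 \<Omega>" and Qu: "?Q u < 0" using u A_iff by auto
    obtain \<delta> where \<delta>: "\<delta> > 0" "\<And>v. v \<in> H01 \<Omega> \<Longrightarrow> hnorm2 \<Omega> (\<lambda>x. v x - u x) < \<delta> \<Longrightarrow> \<bar>?Q v - ?Q u\<bar> < - ?Q u"
      using Qc[OF uH, of "- ?Q u"] Qu by auto
    have "v \<in> ?A" if "v \<in> H01 \<Omega>" "hnorm2 \<Omega> (\<lambda>x. v x - u x) < \<delta>" for v
      using \<delta>(2)[OF that] that(1) A_iff by (auto simp: abs_less_iff)
    then show ?thesis using \<delta>(1) by blast
  qed
  have Hopen: "H_open \<Omega> ?A" unfolding H_open_def using openA by (auto simp: setA_def)
  obtain m where m: "m \<ge> 1" "lambda_eig \<Omega> \<eta> m < 1" using f2 by blast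
  obtain l where l: "l \<in> pos_eigs \<Omega> \<eta>" "l < 1"
    using eig_lt[of \<Omega> \<eta> "m - 1"] m(2) by (auto simp: lambda_eig_def)
  obtain u0 where u0: "u0 \<in> H01 \<Omega>" "\<not> (AE x in lebesgue_on \<Omega>. u0 x = 0)"
    "\<And>v. v \<in> H01 \<Omega> \<Longrightarrow> integral\<^sup>L (lebesgue_on \<Omega>) (\<lambda>x. wgrad \<Omega> u0 x \<bullet> wgrad \<Omega> v x)
                = l * integral\<^sup>L (lebesgue_on \<Omega>) (\<lambda>x. \<eta> x * u0 x * v x)"
    using l(1) unfolding pos_eigs_def is_eigenvalue_def by blast
  have l0: "l > 0" using l(1) by (simp add: pos_eigs_def)
  have hu0: "hnorm2 \<Omega> u0 > 0" by (rule hpos[OF \<Omega>o \<Omega>b u0(1,2)])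
  have eig: "hnorm2 \<Omega> u0 = l * ?J u0"
    using u0(3)[OF u0(1)] unfolding hnorm2_def power2_norm_eq_inner by (simp add: power2_eq_square mult.assoc)
  have J0: "?J u0 > 0" using zero_less_mult_pos[of l "?J u0"] eig hu0 l0 by simp
  have "?Q u0 = (l - 1) * ?J u0" using eig Q_iff[of u0] by (simp add: algebra_simps)
  moreover have "(l - 1) * ?J u0 < 0" using l(2) J0 by (intro mult_neg_pos) auto
  ultimately have Qu0: "?Q u0 < 0" by simp
  have u0A: "u0 \<in> ?A" using A_iff u0(1) Qu0 by simp
  have sphere: "unit_sphere \<Omega> \<inter> ?A \<noteq> {}"
  proof -
    define c where "c = 1 / sqrt (hnorm2 \<Omega> u0)"
    define w where "w = (\<lambda>x. c * u0 x + 0 * u0 x)"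
    have wH: "w \<in> H01 \<Omega>" unfolding w_def by (rule Hl(1)[OF u0(1) u0(1)])
    have "hnorm2 \<Omega> w = c\<^sup>2 * hnorm2 \<Omega> u0" unfolding w_def using Hl(2)[OF u0(1) u0(1), of c 0] by simp
    also have "\<dots> = 1" using hu0 by (simp add: c_def power_divide)
    finally have w1: "hnorm2 \<Omega> w = 1" .
    have "?Q w = c\<^sup>2 * ?Q u0" unfolding w_def using Ql[OF u0(1) u0(1), of c 0] by simp
    moreover have "c\<^sup>2 > 0" using hu0 by (simp add: c_def)
    ultimately have "?Q w < 0" using Qu0 by (simp add: mult_pos_neg)
    then have "w \<in> unit_sphere \<Omega> \<inter> ?A" using wH w1 A_iff by (simp add: unit_sphere_def)
    then show ?thesis by blast
  qed
  have bd: "H_boundary \<Omega> ?A = {u \<in> H01 \<Omega>. hnorm2 \<Omega> u = ?J u}"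
  proof (intro set_eqI iffI)
    fix u assume "u \<in> H_boundary \<Omega> ?A"
    then have cl: "u \<in> H_closure \<Omega> ?A" and ni: "u \<notin> H_interior \<Omega> ?A" by (auto simp: H_boundary_def)
    have uH: "u \<in> H01 \<Omega>" using cl by (simp add: H_closure_def)
    have "\<not> ?Q u < 0"
    proof
      assume "?Q u < 0"
      then have "u \<in> ?A" using uH A_iff by simp
      then have "u \<in> H_interior \<Omega> ?A" using openA unfolding H_interior_def by blast
      then show False using ni by simp
    qed
    moreover have "\<not> ?Q u > 0"
    proof
      assume Qp: "?Q u > 0"
      obtain \<delta> where \<delta>: "\<delta> > 0" "\<And>v. v \<in> H01 \<Omega> \<Longrightarrow> hnorm2 \<Omega> (\<lambda>x. v x - u x) < \<delta> \<Longrightarrow> \<bar>?Q v - ?Q u\<bar> < ?Q u"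
        using Qc[OF uH Qp] by auto
      obtain v where v: "v \<in> ?A" "hnorm2 \<Omega> (\<lambda>x. v x - u x) < \<delta>" using cl \<delta>(1) unfolding H_closure_def by blast
      have "v \<in> H01 \<Omega>" "?Q v < 0" using v(1) A_iff by auto
      then show False using \<delta>(2)[OF _ v(2)] by (auto simp: abs_less_iff)
    qed
    ultimately have "?Q u = 0" by simp
    then show "u \<in> {u \<in> H01 \<Omega>. hnorm2 \<Omega> u = ?J u}" using uH Q_iff[of u] by simp
  next
    fix u assume "u \<in> {u \<in> H01 \<Omega>. hnorm2 \<Omega> u = ?J u}"
    then have uH: "u \<in> H01 \<Omega>" and Q0: "?Q u = 0" using Q_iff[of u] by auto
    have ni: "u \<notin> H_interior \<Omega> ?A" using Q0 A_iff by (auto simp: H_interior_def)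
    have cl: "u \<in> H_closure \<Omega> ?A"
      unfolding H_closure_def
    proof (intro CollectI conjI allI impI uH)
      fix e :: real assume e: "e > 0"
      define hw where "hw = hnorm2 \<Omega> u0"
      define b where "b = Bf \<Omega> u u0 - Jf \<Omega> \<eta> u u0"
      define s where "s = sqrt (e / (hw + 1))"
      have hw0: "hw > 0" using hu0 by (simp add: hw_def)
      have s0: "s > 0" using e hw0 by (simp add: s_def)
      define t where "t = (if b \<ge> 0 then - s else s)"
      have tb: "t * b \<le> 0"
      proof (cases "b \<ge> 0")
        case True then show ?thesis using s0 by (simp add: t_def)
      next
        case False then show ?thesis using s0 mult_pos_neg[of s b] by (simp add: t_def)
      qed
      have t2: "t\<^sup>2 = e / (hw + 1)" using e hw0 by (simp add: t_def s_def)
      have t2p: "t\<^sup>2 > 0" using t2 e hw0 by simp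
      define v where "v = (\<lambda>x. 1 * u x + t * u0 x)"
      have vH: "v \<in> H01 \<Omega>" unfolding v_def by (rule Hl(1)[OF uH u0(1)])
      have "?Q v = 2 * t * b + t\<^sup>2 * ?Q u0" unfolding v_def using Ql[OF uH u0(1), of 1 t] Q0 by (simp add: b_def)
      moreover have "t\<^sup>2 * ?Q u0 < 0" using t2p Qu0 by (simp add: mult_pos_neg)
      ultimately have "?Q v < 0" using tb by linarith
      then have vA: "v \<in> ?A" using vH A_iff by simp
      have "(\<lambda>x. v x - u x) = (\<lambda>x. t * u0 x + 0 * u0 x)" by (simp add: v_def fun_eq_iff)
      then have "hnorm2 \<Omega> (\<lambda>x. v x - u x) = t\<^sup>2 * hw"
        using Hl(2)[OF u0(1) u0(1), of t 0] by (simp add: hw_def)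
      also have "\<dots> = e * (hw / (hw + 1))" using t2 by simp
      also have "\<dots> < e" using e hw0 by (simp add: field_simps)
      finally show "\<exists>v\<in>?A. hnorm2 \<Omega> (\<lambda>x. v x - u x) < e" using vA by blast
    qed
    show "u \<in> H_boundary \<Omega> ?A" using cl ni by (simp add: H_boundary_def)
  qed
  have compl: "H01 \<Omega> - ?A = {u \<in> H01 \<Omega>. hnorm2 \<Omega> u \<ge> ?J u}"
    by (auto simp: setA_def not_less)
  have neh: "nehari \<Omega> f \<subseteq> ?A"
  proof
    fix u assume "u \<in> nehari \<Omega> f"
    then have uH: "u \<in> H01 \<Omega>" and nz: "\<not> (AE x in lebesgue_on \<Omega>. u x = 0)"
      and hn: "hnorm2 \<Omega> u = integral\<^sup>L (lebesgue_on \<Omega>) (\<lambda>x. f x (u x) * u x)"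
      by (auto simp: nehari_def)
    have hp: "hnorm2 \<Omega> u > 0" by (rule hpos[OF \<Omega>o \<Omega>b uH nz])
    have if1: "integrable (lebesgue_on \<Omega>) (\<lambda>x. f x (u x) * u x)"
      using hp hn not_integrable_integral_eq by fastforce
    have Lu: "L2 (lebesgue_on \<Omega>) u" using H01_L2(1)[OF \<Omega>o \<Omega>b uH] .
    have iJ: "integrable (lebesgue_on \<Omega>) (\<lambda>x. \<eta> x * (u x)\<^sup>2)"
      using J_int[OF \<Omega>o \<Omega>b \<eta>m \<eta>E E0 Lu Lu] by (simp add: power2_eq_square mult.assoc)
    define D where "D x = \<eta> x * (u x)\<^sup>2 - f x (u x) * u x" for x
    have iD: "integrable (lebesgue_on \<Omega>) D" unfolding D_def[abs_def] using iJ if1 by simp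
    have pw: "AE x in lebesgue_on \<Omega>. 0 \<le> D x \<and> (u x \<noteq> 0 \<longrightarrow> 0 < D x)"
      using f1
    proof eventually_elim
      case (elim x)
      show ?case
      proof (cases "u x = 0")
        case True then show ?thesis by (simp add: D_def)
      next
        case False
        have "f x (u x) * u x < \<eta> x * (u x)\<^sup>2"
          by (rule ratio_bound[of "f x"]) (use elim False in auto)
        then show ?thesis using False by (simp add: D_def)
      qed
    qed
    have "integral\<^sup>L (lebesgue_on \<Omega>) D \<noteq> 0"
    proof
      assume "integral\<^sup>L (lebesgue_on \<Omega>) D = 0"
      then have "AE x in lebesgue_on \<Omega>. D x = 0"
        using iD pw by (subst (asm) integral_nonneg_eq_0_iff_AE) (auto elim: AE_mp)
      then have "AE x in lebesgue_on \<Omega>. u x = 0" using pw by eventually_elim auto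
      then show False using nz by simp
    qed
    moreover have "integral\<^sup>L (lebesgue_on \<Omega>) D \<ge> 0" using pw by (intro integral_nonneg_AE) (auto elim: AE_mp)
    ultimately have "integral\<^sup>L (lebesgue_on \<Omega>) D > 0" by simp
    then have "hnorm2 \<Omega> u < ?J u" using iJ if1 hn by (simp add: D_def[abs_def])
    then show "u \<in> ?A" using uH by (simp add: setA_def)
  qed
  show ?thesis using Hopen u0A bd compl neh sphere by blast
qed


end
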